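(* Let $(\mathcal{G},\underline{a})$ be a finite metric graph and let $A,B$ be linear maps in $\mathcal{K}$ with $(A,\,B)$ surjective and $AB^*$ self-adjoint. Then the function $L(\cdot,\underline{a})\colon[0,\infty)\to\operatorname{Herm}(\operatorname{Ran}P^\perp)$, $\kappa\mapsto L(\kappa,\underline{a})$, has the following properties: (1) it is norm-continuous; (2) for each $x\in\operatorname{Ran}P^\perp\setminus\{0\}$ the function $\mathfrak{l}[x](\kappa)=\langle L(\kappa,\underline{a})x,x\rangle$ is decreasing at value zero, i.e. if $\mathfrak{l}[x](\kappa_0)=0$ then $\mathfrak{l}[x](\kappa)>0$ for $\kappa<\kappa_0$ and $\mathfrak{l}[x](\kappa)<0$ for $\kappa>\kappa_0$; (3) there is $\gamma\in[0,\infty)$ such that $L(\gamma,\underline{a})<0$ (strictly negative definite on $\operatorname{Ran}P^\perp$).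
   Context: A finite metric graph has a finite set $\mathcal{I}$ of internal edges, identified with intervals $[0,a_i]$, $a_i>0$, and a finite set $\mathcal{E}$ of external edges identified with $[0,\infty)$; $\underline{a}=\{a_i\}_{i\in\mathcal{I}}$. Let $\mathcal{K}=\mathcal{K}_{\mathcal{E}}\oplus\mathcal{K}_{\mathcal{I}}^-\oplus\mathcal{K}_{\mathcal{I}}^+$ with $\mathcal{K}_{\mathcal{E}}\cong\mathbb{C}^{|\mathcal{E}|}$, $\mathcal{K}_{\mathcal{I}}^\pm\cong\mathbb{C}^{|\mathcal{I}|}$. For $A,B$ as stated let $P$ be the orthogonal projector onto $\operatorname{Ker}B$, $P^\perp=1-P$, and $L=(B|_{\operatorname{Ran}B^*})^{-1}AP^\perp$, a Hermitian operator in $\operatorname{Ran}P^\perp$; $\operatorname{Herm}(X)$ denotes the Hermitian operators on $X$. With respect to the decomposition of $\mathcal{K}$ let $$Q=\begin{bmatrix}1&0&0\\0&\frac{1}{\sqrt2}&\frac{1}{\sqrt2}\\0&\frac{1}{\sqrt2}&-\frac{1}{\sqrt2}\end{bmatrix},\qquad D(\kappa,\underline{a})=\begin{bmatrix}-\kappa&0&0\\0&\lambda(\kappa,\underline{a})&0\\0&0&\mu(\kappa,\underline{a})\end{bmatrix},$$ where $\lambda(\kappa,\underline{a})$ and $\mu(\kappa,\underline{a})$ are the diagonal matrices with entries $-\kappa\tanh(\kappa a_i/2)$ and $-\kappa/\tanh(\kappa a_i/2)$ respectively (for $\kappa=0$ the latter is interpreted by continuity as $-2/a_i$). Set $M(\kappa,\underline{a})=QD(\kappa,\underline{a})Q$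 and $L(\kappa,\underline{a})=L+P^\perp M(\kappa,\underline{a})P^\perp$, regarded as a Hermitian operator in $\operatorname{Ran}P^\perp$, for $\kappa\ge0$. *)

theory Defs
  imports Complex_Main "Jordan_Normal_Form.Schur_Decomposition" "Jordan_Normal_Form.Matrix_Kernel"
begin

text \<open>The space K = K_E (+) K_I^- (+) K_I^+ is modelled as complex vectors of dimension
  nE + 2 nI: coordinates 0..<nE are K_E, coordinates nE..<nE+nI are K_I^- and
  coordinates nE+nI..<nE+2nI are K_I^+ (edge i of I corresponds to offset i).\<close>

definition vnorm :: "complex vec \<Rightarrow> real" where
  "vnorm x = sqrt (Re (x \<bullet>c x))"

definition op_norm_on :: "complex vec set \<Rightarrow> (complex vec \<Rightarrow> complex vec) \<Rightarrow> real" where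
  "op_norm_on S f = Sup ((\<lambda>x. vnorm (f x)) ` {x \<in> S. vnorm x \<le> 1})"

definition orth_proj :: "complex vec set \<Rightarrow> complex vec \<Rightarrow> complex vec" where
  "orth_proj S x = (THE y. y \<in> S \<and> (\<forall>z\<in>S. (x - y) \<bullet>c z = 0))"

text \<open>P = orthogonal projector onto Ker B, and P^perp = 1 - P.\<close>
definition projKer :: "complex mat \<Rightarrow> complex vec \<Rightarrow> complex vec" where
  "projKer B x = orth_proj (mat_kernel B) x"

definition projKerPerp :: "complex mat \<Rightarrow> complex vec \<Rightarrow> complex vec" where
  "projKerPerp B x = x - projKer B x"

definition RanPperp :: "nat \<Rightarrow> complex mat \<Rightarrow> complex vec set" where
  "RanPperp n B = projKerPerp B ` carrier_vec n"

definition RanAdj :: "nat \<Rightarrow> complex mat \<Rightarrow> complex vec set" where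
  "RanAdj n B = {mat_adjoint B *\<^sub>v u | u. u \<in> carrier_vec n}"

text \<open>L = (B restricted to Ran B^*)^{-1} A P^perp.\<close>
definition Lop :: "nat \<Rightarrow> complex mat \<Rightarrow> complex mat \<Rightarrow> complex vec \<Rightarrow> complex vec" where
  "Lop n A B x = (THE y. y \<in> RanAdj n B \<and> B *\<^sub>v y = A *\<^sub>v projKerPerp B x)"

definition Qmat :: "nat \<Rightarrow> nat \<Rightarrow> complex mat" where
  "Qmat nE nI = mat (nE + 2 * nI) (nE + 2 * nI) (\<lambda>(i, j).
     if i < nE \<or> j < nE then (if i = j then 1 else 0)
     else if i < nE + nI then
       (if j = i \<or> j = i + nI then complex_of_real (1 / sqrt 2) else 0)
     else
       (if j = i - nI then complex_of_real (1 / sqrt 2)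
        else if j = i then complex_of_real (- 1 / sqrt 2) else 0))"

definition Dentry :: "nat \<Rightarrow> nat \<Rightarrow> (nat \<Rightarrow> real) \<Rightarrow> real \<Rightarrow> nat \<Rightarrow> real" where
  "Dentry nE nI a \<kappa> i =
     (if i < nE then - \<kappa>
      else if i < nE + nI then - \<kappa> * tanh (\<kappa> * a (i - nE) / 2)
      else if \<kappa> = 0 then - 2 / a (i - nE - nI)
      else - \<kappa> / tanh (\<kappa> * a (i - nE - nI) / 2))"

definition Dmat :: "nat \<Rightarrow> nat \<Rightarrow> (nat \<Rightarrow> real) \<Rightarrow> real \<Rightarrow> complex mat" where
  "Dmat nE nI a \<kappa> = mat (nE + 2 * nI) (nE + 2 * nI)
     (\<lambda>(i, j). if i = j then complex_of_real (Dentry nE nI a \<kappa> i) else 0)"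

definition Mmat :: "nat \<Rightarrow> nat \<Rightarrow> (nat \<Rightarrow> real) \<Rightarrow> real \<Rightarrow> complex mat" where
  "Mmat nE nI a \<kappa> = Qmat nE nI * Dmat nE nI a \<kappa> * Qmat nE nI"

definition Lkappa :: "nat \<Rightarrow> nat \<Rightarrow> complex mat \<Rightarrow> complex mat \<Rightarrow> (nat \<Rightarrow> real) \<Rightarrow> real
    \<Rightarrow> complex vec \<Rightarrow> complex vec" where
  "Lkappa nE nI A B a \<kappa> x =
     Lop (nE + 2 * nI) A B x
     + projKerPerp B (Mmat nE nI a \<kappa> *\<^sub>v projKerPerp B x)"

end

theory Submission
  imports Defs
begin

lemma cip: "x \<in> carrier_vec n \<Longrightarrow> y \<in> carrier_vec n \<Longrightarrow> x \<bullet>c y = (\<Sum>i<n. x$i * cnj (y$i))"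
  unfolding scalar_prod_def by (auto intro!: sum.cong simp: lessThan_atLeast0)

lemma cip_add_l: fixes x y z :: "complex vec" assumes "x \<in> carrier_vec n" "y \<in> carrier_vec n" "z \<in> carrier_vec n"
  shows "(x + y) \<bullet>c z = x \<bullet>c z + y \<bullet>c z"
proof -
  have "(x + y) \<bullet>c z = (\<Sum>i<n. (x+y)$i * cnj (z$i))" by (rule cip) (use assms in auto)
  also have "\<dots> = (\<Sum>i<n. x$i * cnj (z$i) + y$i * cnj (z$i))"
    by (rule sum.cong) (use assms in \<open>auto simp: distrib_right\<close>)
  finally show ?thesis by (simp add: sum.distrib cip[OF assms(1,3)] cip[OF assms(2,3)])
qed

lemma cip_add_r: fixes x y z :: "complex vec" assumes "x \<in> carrier_vec n" "y \<in> carrier_vec n" "z \<in> carrier_vec n"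
  shows "z \<bullet>c (x + y) = z \<bullet>c x + z \<bullet>c y"
proof -
  have "z \<bullet>c (x + y) = (\<Sum>i<n. z$i * cnj ((x+y)$i))" by (rule cip) (use assms in auto)
  also have "\<dots> = (\<Sum>i<n. z$i * cnj (x$i) + z$i * cnj (y$i))"
    by (rule sum.cong) (use assms in \<open>auto simp: distrib_left\<close>)
  finally show ?thesis by (simp add: sum.distrib cip[OF assms(3,1)] cip[OF assms(3,2)])
qed

lemma cip_minus_l: fixes x y z :: "complex vec" assumes "x \<in> carrier_vec n" "y \<in> carrier_vec n" "z \<in> carrier_vec n"
  shows "(x - y) \<bullet>c z = x \<bullet>c z - y \<bullet>c z"
proof -
  have "(x - y) \<bullet>c z = (\<Sum>i<n. (x-y)$i * cnj (z$i))" by (rule cip) (use assms in auto)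
  also have "\<dots> = (\<Sum>i<n. x$i * cnj (z$i) - y$i * cnj (z$i))"
    by (rule sum.cong) (use assms in \<open>auto simp: left_diff_distrib\<close>)
  finally show ?thesis by (simp add: sum_subtractf cip[OF assms(1,3)] cip[OF assms(2,3)])
qed

lemma cip_minus_r: fixes x y z :: "complex vec" assumes "x \<in> carrier_vec n" "y \<in> carrier_vec n" "z \<in> carrier_vec n"
  shows "z \<bullet>c (x - y) = z \<bullet>c x - z \<bullet>c y"
proof -
  have "z \<bullet>c (x - y) = (\<Sum>i<n. z$i * cnj ((x-y)$i))" by (rule cip) (use assms in auto)
  also have "\<dots> = (\<Sum>i<n. z$i * cnj (x$i) - z$i * cnj (y$i))"
    by (rule sum.cong) (use assms in \<open>auto simp: right_diff_distrib\<close>)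
  finally show ?thesis by (simp add: sum_subtractf cip[OF assms(3,1)] cip[OF assms(3,2)])
qed

lemma cip_smult_l: fixes x z :: "complex vec" assumes "x \<in> carrier_vec n" "z \<in> carrier_vec n"
  shows "(c \<cdot>\<^sub>v x) \<bullet>c z = c * (x \<bullet>c z)"
proof -
  have "(c \<cdot>\<^sub>v x) \<bullet>c z = (\<Sum>i<n. (c \<cdot>\<^sub>v x)$i * cnj (z$i))" by (rule cip) (use assms in auto)
  also have "\<dots> = (\<Sum>i<n. c * (x$i * cnj (z$i)))"
    by (rule sum.cong) (use assms in \<open>auto\<close>)
  finally show ?thesis by (simp add: sum_distrib_left cip[OF assms(1,2)])
qed

lemma cip_smult_r: fixes x z :: "complex vec" assumes "x \<in> carrier_vec n" "z \<in> carrier_vec n"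
  shows "z \<bullet>c (c \<cdot>\<^sub>v x) = cnj c * (z \<bullet>c x)"
proof -
  have "z \<bullet>c (c \<cdot>\<^sub>v x) = (\<Sum>i<n. z$i * cnj ((c \<cdot>\<^sub>v x)$i))" by (rule cip) (use assms in auto)
  also have "\<dots> = (\<Sum>i<n. cnj c * (z$i * cnj (x$i)))"
    by (rule sum.cong) (use assms in \<open>auto\<close>)
  finally show ?thesis by (simp add: sum_distrib_left cip[OF assms(2,1)])
qed

lemma cip_sym: fixes x y :: "complex vec" assumes "x \<in> carrier_vec n" "y \<in> carrier_vec n"
  shows "x \<bullet>c y = cnj (y \<bullet>c x)"
  using assms by (simp add: cip[OF assms] cip[OF assms(2,1)] mult.commute)

lemma cip_zero_l: "(z::complex vec) \<in> carrier_vec n \<Longrightarrow> 0\<^sub>v n \<bullet>c z = 0"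
  by (simp add: cip[of _ n])

lemma cip_zero_r: "(z::complex vec) \<in> carrier_vec n \<Longrightarrow> z \<bullet>c 0\<^sub>v n = 0"
  by (simp add: cip[of _ n])

lemma cip_self: assumes "(x::complex vec) \<in> carrier_vec n" shows "x \<bullet>c x = complex_of_real (\<Sum>i<n. (cmod (x$i))\<^sup>2)"
proof -
  have "x \<bullet>c x = (\<Sum>i<n. complex_of_real ((cmod (x$i))\<^sup>2))"
    by (simp add: cip[OF assms assms] complex_norm_square del: of_real_power)
  also have "\<dots> = complex_of_real (\<Sum>i<n. (cmod (x$i))\<^sup>2)" by (simp only: of_real_sum)
  finally show ?thesis .
qed

lemma cip_self_Re: "(x::complex vec) \<in> carrier_vec n \<Longrightarrow> Re (x \<bullet>c x) = (\<Sum>i<n. (cmod (x$i))\<^sup>2)"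
  by (simp add: cip_self)

lemma cip_self_nonneg: "(x::complex vec) \<in> carrier_vec n \<Longrightarrow> Re (x \<bullet>c x) \<ge> 0"
  by (simp add: cip_self_Re sum_nonneg)

lemma cip_self_zero: fixes x :: "complex vec" assumes "x \<in> carrier_vec n" "x \<bullet>c x = 0" shows "x = 0\<^sub>v n"
proof -
  have "(\<Sum>i<n. (cmod (x$i))\<^sup>2) = 0" using assms cip_self[OF assms(1)] by (metis of_real_eq_0_iff)
  hence "\<forall>i\<in>{..<n}. (cmod (x$i))\<^sup>2 = 0" by (subst sum_nonneg_eq_0_iff[symmetric]) auto
  thus ?thesis using assms(1) by (intro eq_vecI) auto
qed

lemma cip_self_pos: fixes x :: "complex vec" assumes "x \<in> carrier_vec n" "x \<noteq> 0\<^sub>v n" shows "Re (x \<bullet>c x) > 0"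
proof -
  have "x \<bullet>c x \<noteq> 0" using cip_self_zero assms by blast
  hence "Re (x \<bullet>c x) \<noteq> 0" using cip_self[OF assms(1)] by (metis Re_complex_of_real of_real_0)
  thus ?thesis using cip_self_nonneg[OF assms(1)] by linarith
qed

lemma comp_le_vnorm: fixes x :: "complex vec" assumes "x \<in> carrier_vec n" "j < n" shows "cmod (x$j) \<le> vnorm x"
proof -
  have "(cmod (x$j))\<^sup>2 \<le> (\<Sum>i<n. (cmod (x$i))\<^sup>2)"
    using assms by (intro member_le_sum) auto
  hence "sqrt ((cmod (x$j))\<^sup>2) \<le> sqrt (\<Sum>i<n. (cmod (x$i))\<^sup>2)" by (rule real_sqrt_le_mono)
  thus ?thesis unfolding vnorm_def cip_self_Re[OF assms(1)] by simp
qed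

lemma vnorm_sq: "(x::complex vec) \<in> carrier_vec n \<Longrightarrow> (vnorm x)\<^sup>2 = Re (x \<bullet>c x)"
  unfolding vnorm_def using cip_self_nonneg[of x n] by simp

lemma sqrt_sum_sq_le: fixes f :: "nat \<Rightarrow> real"
  assumes "\<And>i. i \<in> S \<Longrightarrow> f i \<ge> 0" "finite S"
  shows "sqrt (\<Sum>i\<in>S. (f i)\<^sup>2) \<le> (\<Sum>i\<in>S. f i)"
proof -
  have "(\<Sum>i\<in>S. (f i)\<^sup>2) \<le> (\<Sum>i\<in>S. f i * (\<Sum>j\<in>S. f j))"
    unfolding power2_eq_square
    by (intro sum_mono mult_left_mono member_le_sum) (auto simp: assms)
  also have "\<dots> = (\<Sum>i\<in>S. f i)\<^sup>2" by (simp add: power2_eq_square sum_distrib_right)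
  finally show ?thesis using assms by (simp add: real_le_lsqrt sum_nonneg)
qed

lemma vnorm_le_sum: assumes "(x::complex vec) \<in> carrier_vec n" shows "vnorm x \<le> (\<Sum>i<n. cmod (x$i))"
  unfolding vnorm_def cip_self_Re[OF assms] by (rule sqrt_sum_sq_le) auto

lemma vnorm_nonneg: "vnorm (x::complex vec) \<ge> 0"
proof -
  have "x \<in> carrier_vec (dim_vec x)" by (rule carrier_vecI) (rule refl)
  from cip_self_nonneg[OF this] show ?thesis unfolding vnorm_def by (rule real_sqrt_ge_zero)
qed

lemma mat_vec_idx: fixes G :: "complex mat"
  assumes "G \<in> carrier_mat n m" "x \<in> carrier_vec m" "i < n"
  shows "(G *\<^sub>v x) $ i = (\<Sum>j<m. G $$ (i,j) * x $ j)"
proof -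
  have "(G *\<^sub>v x) $ i = row G i \<bullet> x" using assms by simp
  also have "\<dots> = (\<Sum>j\<in>{0..<m}. row G i $ j * x $ j)" using assms unfolding scalar_prod_def by simp
  also have "\<dots> = (\<Sum>j<m. G $$ (i,j) * x $ j)" using assms
    by (simp add: lessThan_atLeast0)
  finally show ?thesis .
qed


lemma mat_vec_bound: fixes G :: "complex mat" assumes G: "G \<in> carrier_mat n n" and x: "x \<in> carrier_vec n"
  shows "vnorm (G *\<^sub>v x) \<le> (\<Sum>i<n. \<Sum>j<n. cmod (G $$ (i,j))) * vnorm x"
proof -
  have comp: "cmod ((G *\<^sub>v x) $ i) \<le> (\<Sum>j<n. cmod (G $$ (i,j))) * vnorm x" if i: "i < n" for i
  proof -
    have "(G *\<^sub>v x) $ i = (\<Sum>j<n. G $$ (i,j) * x $ j)"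
      using G x i by (auto simp: scalar_prod_def lessThan_atLeast0 intro!: sum.cong)
    hence "cmod ((G *\<^sub>v x) $ i) \<le> (\<Sum>j<n. cmod (G $$ (i,j) * x $ j))"
      by (simp add: norm_sum)
    also have "\<dots> \<le> (\<Sum>j<n. cmod (G $$ (i,j)) * vnorm x)"
      by (intro sum_mono) (auto simp: norm_mult intro!: mult_left_mono comp_le_vnorm[OF x])
    finally show ?thesis by (simp add: sum_distrib_right)
  qed
  have "vnorm (G *\<^sub>v x) \<le> (\<Sum>i<n. cmod ((G *\<^sub>v x) $ i))"
    using G x by (intro vnorm_le_sum) auto
  also have "\<dots> \<le> (\<Sum>i<n. (\<Sum>j<n. cmod (G $$ (i,j))) * vnorm x)"
    by (intro sum_mono comp) auto
  finally show ?thesis by (simp add: sum_distrib_right)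
qed

lemma quad_bound: fixes G :: "complex mat" assumes G: "G \<in> carrier_mat n n" and x: "x \<in> carrier_vec n"
  shows "cmod ((G *\<^sub>v x) \<bullet>c x) \<le> (\<Sum>i<n. \<Sum>j<n. cmod (G $$ (i,j))) * (vnorm x)\<^sup>2"
proof -
  let ?C = "(\<Sum>i<n. \<Sum>j<n. cmod (G $$ (i,j)))"
  have "cmod ((G *\<^sub>v x) \<bullet>c x) = cmod (\<Sum>i<n. (G *\<^sub>v x)$i * cnj (x$i))"
    using G x by (subst cip[of _ n]) auto
  also have "\<dots> \<le> (\<Sum>i<n. cmod ((G *\<^sub>v x)$i) * cmod (x$i))"
    by (rule order_trans[OF norm_sum]) (simp add: norm_mult)
  also have "\<dots> \<le> (\<Sum>i<n. cmod ((G *\<^sub>v x)$i) * vnorm x)"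
    by (intro sum_mono mult_left_mono comp_le_vnorm[OF x]) auto
  also have "\<dots> = (\<Sum>i<n. cmod ((G *\<^sub>v x)$i)) * vnorm x" by (simp add: sum_distrib_right)
  also have "\<dots> \<le> (?C * vnorm x) * vnorm x"
  proof (intro mult_right_mono vnorm_nonneg)
    show "(\<Sum>i<n. cmod ((G *\<^sub>v x)$i)) \<le> ?C * vnorm x"
    proof -
      have "(\<Sum>i<n. cmod ((G *\<^sub>v x)$i)) \<le> (\<Sum>i<n. (\<Sum>j<n. cmod (G $$ (i,j))) * vnorm x)"
      proof (intro sum_mono)
        fix i assume i: "i \<in> {..<n}"
        have "(G *\<^sub>v x) $ i = (\<Sum>j<n. G $$ (i,j) * x $ j)"
          using G x i by (auto simp: scalar_prod_def lessThan_atLeast0 intro!: sum.cong)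
        hence "cmod ((G *\<^sub>v x) $ i) \<le> (\<Sum>j<n. cmod (G $$ (i,j) * x $ j))"
          by (simp add: norm_sum)
        also have "\<dots> \<le> (\<Sum>j<n. cmod (G $$ (i,j)) * vnorm x)"
          by (intro sum_mono) (auto simp: norm_mult intro!: mult_left_mono comp_le_vnorm[OF x])
        finally show "cmod ((G *\<^sub>v x) $ i) \<le> (\<Sum>j<n. cmod (G $$ (i,j))) * vnorm x"
          by (simp add: sum_distrib_right)
      qed
      thus ?thesis by (simp add: sum_distrib_right)
    qed
  qed
  finally show ?thesis by (simp add: power2_eq_square mult.assoc)
qed


lemma adj_carrier: "M \<in> carrier_mat n m \<Longrightarrow> mat_adjoint M \<in> carrier_mat m n"
  unfolding mat_adjoint_def by auto

lemma adj_idx: assumes "(M::complex mat) \<in> carrier_mat n m" "i < m" "j < n"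
  shows "mat_adjoint M $$ (i,j) = cnj (M $$ (j,i))"
  using assms unfolding mat_adjoint_def by (simp add: mat_of_rows_index)

lemma adj_ip: fixes M :: "complex mat"
  assumes M: "M \<in> carrier_mat n n" and u: "u \<in> carrier_vec n" and z: "z \<in> carrier_vec n"
  shows "(mat_adjoint M *\<^sub>v u) \<bullet>c z = u \<bullet>c (M *\<^sub>v z)"
proof -
  have MA: "mat_adjoint M \<in> carrier_mat n n" using adj_carrier[OF M] .
  have "(mat_adjoint M *\<^sub>v u) \<bullet>c z = (\<Sum>i<n. (mat_adjoint M *\<^sub>v u)$i * cnj (z$i))"
    using MA u z by (intro cip) auto
  also have "\<dots> = (\<Sum>i<n. (\<Sum>j<n. cnj (M $$ (j,i)) * u$j) * cnj (z$i))"
    by (rule sum.cong[OF refl]) (simp add: mat_vec_idx[OF MA u] adj_idx[OF M])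
  also have "\<dots> = (\<Sum>i<n. \<Sum>j<n. cnj (M $$ (j,i)) * u$j * cnj (z$i))"
    by (simp add: sum_distrib_right)
  also have "\<dots> = (\<Sum>j<n. \<Sum>i<n. cnj (M $$ (j,i)) * u$j * cnj (z$i))"
    by (rule sum.swap)
  also have "\<dots> = (\<Sum>j<n. u$j * cnj (\<Sum>i<n. M $$ (j,i) * z$i))"
    by (simp add: sum_distrib_left cnj_sum mult_ac)
  also have "\<dots> = (\<Sum>j<n. u$j * cnj ((M *\<^sub>v z)$j))"
    by (rule sum.cong[OF refl]) (simp add: mat_vec_idx[OF M z])
  also have "\<dots> = u \<bullet>c (M *\<^sub>v z)" using M u z by (intro cip[symmetric]) auto
  finally show ?thesis .
qed

definition Sk :: "nat \<Rightarrow> complex mat \<Rightarrow> nat \<Rightarrow> complex vec set" where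
  "Sk n M k = {M *\<^sub>v u | u. u \<in> carrier_vec n \<and> (\<forall>j. k \<le> j \<longrightarrow> j < n \<longrightarrow> u$j = 0)}"

context fixes n :: nat and M :: "complex mat" assumes M: "M \<in> carrier_mat n n"
begin

lemma Sk_carrier: "z \<in> Sk n M k \<Longrightarrow> z \<in> carrier_vec n"
  unfolding Sk_def using M by auto

lemma Sk_add: assumes "a \<in> Sk n M k" "b \<in> Sk n M k" shows "a + b \<in> Sk n M k"
proof -
  obtain u where u: "a = M *\<^sub>v u" "u \<in> carrier_vec n" "\<forall>j. k \<le> j \<longrightarrow> j < n \<longrightarrow> u$j = 0"
    using assms(1) unfolding Sk_def by auto
  obtain v where v: "b = M *\<^sub>v v" "v \<in> carrier_vec n" "\<forall>j. k \<le> j \<longrightarrow> j < n \<longrightarrow> v$j = 0"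
    using assms(2) unfolding Sk_def by auto
  have "a + b = M *\<^sub>v (u + v)" using u v M by (simp add: mult_add_distrib_mat_vec)
  moreover have "u + v \<in> carrier_vec n" using u v by auto
  moreover have "\<forall>j. k \<le> j \<longrightarrow> j < n \<longrightarrow> (u+v)$j = 0" using u v by auto
  ultimately show ?thesis unfolding Sk_def by blast
qed

lemma Sk_smult: assumes "a \<in> Sk n M k" shows "c \<cdot>\<^sub>v a \<in> Sk n M k"
proof -
  obtain u where u: "a = M *\<^sub>v u" "u \<in> carrier_vec n" "\<forall>j. k \<le> j \<longrightarrow> j < n \<longrightarrow> u$j = 0"
    using assms(1) unfolding Sk_def by auto
  have "c \<cdot>\<^sub>v a = M *\<^sub>v (c \<cdot>\<^sub>v u)" using u M by (simp add: mult_mat_vec)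
  moreover have "c \<cdot>\<^sub>v u \<in> carrier_vec n" using u by auto
  moreover have "\<forall>j. k \<le> j \<longrightarrow> j < n \<longrightarrow> (c \<cdot>\<^sub>v u)$j = 0" using u by auto
  ultimately show ?thesis unfolding Sk_def by blast
qed

lemma Sk_minus: assumes "a \<in> Sk n M k" "b \<in> Sk n M k" shows "a - b \<in> Sk n M k"
proof -
  have "a - b = a + (-1) \<cdot>\<^sub>v b" using Sk_carrier[OF assms(1)] Sk_carrier[OF assms(2)]
    by (intro eq_vecI) auto
  thus ?thesis using Sk_add[OF assms(1) Sk_smult[OF assms(2)]] by simp
qed

lemma Sk_zero: "0\<^sub>v n \<in> Sk n M k"
proof -
  have "0\<^sub>v n = M *\<^sub>v 0\<^sub>v n" using M by (intro eq_vecI) (auto simp: mat_vec_idx[OF M])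
  thus ?thesis unfolding Sk_def by force
qed

lemma Sk_mono: "Sk n M k \<subseteq> Sk n M (Suc k)"
  unfolding Sk_def by auto

lemma Sk_0: "z \<in> Sk n M 0 \<Longrightarrow> z = 0\<^sub>v n"
proof -
  assume "z \<in> Sk n M 0"
  then obtain u where u: "z = M *\<^sub>v u" "u \<in> carrier_vec n" "\<forall>j. j < n \<longrightarrow> u$j = 0"
    unfolding Sk_def by auto
  have "u = 0\<^sub>v n" using u by (intro eq_vecI) auto
  thus ?thesis using u M by (intro eq_vecI) (auto simp: mat_vec_idx[OF M])
qed

lemma Sk_step1: assumes k: "k < n" and a: "a \<in> Sk n M k"
  shows "a + c \<cdot>\<^sub>v (M *\<^sub>v unit_vec n k) \<in> Sk n M (Suc k)"
proof -
  obtain u where u: "a = M *\<^sub>v u" "u \<in> carrier_vec n" "\<forall>j. k \<le> j \<longrightarrow> j < n \<longrightarrow> u$j = 0"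
    using a unfolding Sk_def by auto
  have "a + c \<cdot>\<^sub>v (M *\<^sub>v unit_vec n k) = M *\<^sub>v (u + c \<cdot>\<^sub>v unit_vec n k)"
    using u M by (simp add: mult_add_distrib_mat_vec mult_mat_vec)
  moreover have "u + c \<cdot>\<^sub>v unit_vec n k \<in> carrier_vec n" using u by auto
  moreover have "\<forall>j. Suc k \<le> j \<longrightarrow> j < n \<longrightarrow> (u + c \<cdot>\<^sub>v unit_vec n k)$j = 0" using u by auto
  ultimately show ?thesis unfolding Sk_def by blast
qed

lemma Sk_step2: assumes k: "k < n" and z: "z \<in> Sk n M (Suc k)"
  shows "\<exists>s\<in>Sk n M k. \<exists>c. z = s + c \<cdot>\<^sub>v (M *\<^sub>v unit_vec n k)"
proof -
  obtain u where u: "z = M *\<^sub>v u" "u \<in> carrier_vec n" "\<forall>j. Suc k \<le> j \<longrightarrow> j < n \<longrightarrow> u$j = 0"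
    using z unfolding Sk_def by auto
  define u' where "u' = vec n (\<lambda>i. if i = k then 0 else u$i)"
  have u': "u' \<in> carrier_vec n" "\<forall>j. k \<le> j \<longrightarrow> j < n \<longrightarrow> u'$j = 0"
    using u unfolding u'_def by auto
  define c where "c = u$k"
  have eq: "u = u' + c \<cdot>\<^sub>v unit_vec n k" using u unfolding u'_def c_def by (intro eq_vecI) (auto simp: unit_vec_def)
  have "z = M *\<^sub>v (u' + c \<cdot>\<^sub>v unit_vec n k)" using u(1) eq by metis
  also have "\<dots> = M *\<^sub>v u' + c \<cdot>\<^sub>v (M *\<^sub>v unit_vec n k)"
    using u' M by (simp add: mult_add_distrib_mat_vec mult_mat_vec)
  finally have "z = M *\<^sub>v u' + c \<cdot>\<^sub>v (M *\<^sub>v unit_vec n k)" .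
  moreover have "M *\<^sub>v u' \<in> Sk n M k" using u' unfolding Sk_def by blast
  ultimately show ?thesis by blast
qed

lemma Sk_n: "Sk n M n = {M *\<^sub>v u | u. u \<in> carrier_vec n}"
  unfolding Sk_def by auto

end


lemma vec_minus_zero: fixes a b :: "complex vec"
  assumes "a \<in> carrier_vec n" "b \<in> carrier_vec n" "a - b = 0\<^sub>v n" shows "a = b"
proof (rule eq_vecI)
  show "dim_vec a = dim_vec b" using assms by auto
  fix i assume "i < dim_vec b"
  hence i: "i < n" using assms by auto
  have "(a - b) $ i = 0" using assms(3) i by simp
  moreover have "(a - b) $ i = a $ i - b $ i" using i assms(2) by simp
  ultimately show "a $ i = b $ i" by simp
qed

context fixes n :: nat and M :: "complex mat" assumes M: "M \<in> carrier_mat n n"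
begin

lemma proj_ex: "k \<le> n \<Longrightarrow> x \<in> carrier_vec n \<Longrightarrow> \<exists>w\<in>Sk n M k. \<forall>z\<in>Sk n M k. (x - w) \<bullet>c z = 0"
proof (induction k arbitrary: x)
  case 0
  show ?case
  proof (intro bexI[of _ "0\<^sub>v n"] ballI)
    fix z assume "z \<in> Sk n M 0"
    hence "z = 0\<^sub>v n" using Sk_0[OF M] by auto
    thus "(x - 0\<^sub>v n) \<bullet>c z = 0" using 0 by (simp add: cip_zero_r)
  qed (rule Sk_zero[OF M])
next
  case (Suc k)
  hence k: "k < n" by auto
  define v where "v = M *\<^sub>v unit_vec n k"
  have v: "v \<in> carrier_vec n" unfolding v_def using M by auto
  obtain w0 where w0: "w0 \<in> Sk n M k" "\<forall>z\<in>Sk n M k. (v - w0) \<bullet>c z = 0"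
    using Suc.IH[of v] k v by auto
  obtain wx where wx: "wx \<in> Sk n M k" "\<forall>z\<in>Sk n M k. (x - wx) \<bullet>c z = 0"
    using Suc.IH[of x] k Suc.prems by auto
  have w0c: "w0 \<in> carrier_vec n" and wxc: "wx \<in> carrier_vec n" using w0 wx Sk_carrier[OF M] by auto
  have x: "x \<in> carrier_vec n" by fact
  define v' where "v' = v - w0"
  have v'c: "v' \<in> carrier_vec n" unfolding v'_def using v w0c by auto
  have decomp: "\<exists>s\<in>Sk n M k. \<exists>c. z = s + c \<cdot>\<^sub>v v" if "z \<in> Sk n M (Suc k)" for z
    using Sk_step2[OF M k that] unfolding v_def .
  show ?case
  proof (cases "v' = 0\<^sub>v n")
    case True
    have vw: "v = w0" using True v w0c unfolding v'_def by (rule vec_minus_zero[rotated 2])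
    show ?thesis
    proof (intro bexI[of _ wx] ballI)
      show "wx \<in> Sk n M (Suc k)" using wx Sk_mono[OF M] by auto
      fix z assume "z \<in> Sk n M (Suc k)"
      then obtain s c where s: "s \<in> Sk n M k" "z = s + c \<cdot>\<^sub>v v" using decomp by blast
      have "z \<in> Sk n M k" using s vw Sk_add[OF M s(1) Sk_smult[OF M w0(1)]] by simp
      thus "(x - wx) \<bullet>c z = 0" using wx by auto
    qed
  next
    case False
    define d where "d = v' \<bullet>c v'"
    have d: "d \<noteq> 0" using False cip_self_zero[OF v'c] unfolding d_def by auto
    define \<alpha> where "\<alpha> = ((x - wx) \<bullet>c v') / d"
    define w where "w = (wx - \<alpha> \<cdot>\<^sub>v w0) + \<alpha> \<cdot>\<^sub>v v"
    have wS: "w \<in> Sk n M (Suc k)" unfolding w_def v_def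
      by (rule Sk_step1[OF M k]) (intro Sk_minus[OF M] wx(1) Sk_smult[OF M] w0(1))
    have v'S: "\<forall>z\<in>Sk n M k. v' \<bullet>c z = 0" using w0 unfolding v'_def by auto
    have id1: "x - w = (x - wx) - \<alpha> \<cdot>\<^sub>v v'" unfolding w_def v'_def
      using x wxc w0c v by (intro eq_vecI) (auto simp: algebra_simps)
    show ?thesis
    proof (intro bexI[OF _ wS] ballI)
      fix z assume "z \<in> Sk n M (Suc k)"
      then obtain s c where s: "s \<in> Sk n M k" "z = s + c \<cdot>\<^sub>v v" using decomp by blast
      define s' where "s' = s + c \<cdot>\<^sub>v w0"
      have s'S: "s' \<in> Sk n M k" unfolding s'_def by (intro Sk_add[OF M] s(1) Sk_smult[OF M] w0(1))
      have s'c: "s' \<in> carrier_vec n" using Sk_carrier[OF M s'S] .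
      have sc: "s \<in> carrier_vec n" using Sk_carrier[OF M s(1)] .
      have id2: "z = s' + c \<cdot>\<^sub>v v'" unfolding s(2) s'_def v'_def
        using sc w0c v by (intro eq_vecI) (auto simp: algebra_simps)
      have r: "(x - wx) - \<alpha> \<cdot>\<^sub>v v' \<in> carrier_vec n" using x wxc v'c by auto
      have "(x - w) \<bullet>c z = ((x - wx) - \<alpha> \<cdot>\<^sub>v v') \<bullet>c s' + cnj c * (((x - wx) - \<alpha> \<cdot>\<^sub>v v') \<bullet>c v')"
        unfolding id1 id2 using r s'c v'c by (simp add: cip_add_r[of _ n] cip_smult_r[of _ n])
      also have "((x - wx) - \<alpha> \<cdot>\<^sub>v v') \<bullet>c s' = (x - wx) \<bullet>c s' - \<alpha> * (v' \<bullet>c s')"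
        using x wxc v'c s'c by (simp add: cip_minus_l[of _ n] cip_smult_l[of _ n])
      also have "\<dots> = 0" using wx(2) v'S s'S by auto
      also have "((x - wx) - \<alpha> \<cdot>\<^sub>v v') \<bullet>c v' = (x - wx) \<bullet>c v' - \<alpha> * d"
        using x wxc v'c unfolding d_def by (simp add: cip_minus_l[of _ n] cip_smult_l[of _ n])
      also have "\<dots> = 0" unfolding \<alpha>_def using d by simp
      finally show "(x - w) \<bullet>c z = 0" by simp
    qed
  qed
qed

definition projW :: "complex vec \<Rightarrow> complex vec" where
  "projW x = (THE w. w \<in> Sk n M n \<and> (\<forall>z\<in>Sk n M n. (x - w) \<bullet>c z = 0))"

lemma proj_uniq_gen: fixes S :: "complex vec set" and x w1 w2 :: "complex vec"
  assumes S: "\<And>a b. a \<in> S \<Longrightarrow> b \<in> S \<Longrightarrow> a - b \<in> S" "S \<subseteq> carrier_vec n"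
  and x: "x \<in> carrier_vec n"
  and w1: "w1 \<in> S" "\<forall>z\<in>S. (x - w1) \<bullet>c z = 0"
  and w2: "w2 \<in> S" "\<forall>z\<in>S. (x - w2) \<bullet>c z = 0"
  shows "w1 = w2"
proof -
  have c1: "w1 \<in> carrier_vec n" and c2: "w2 \<in> carrier_vec n" using w1(1) w2(1) S(2) by auto
  have dS: "w1 - w2 \<in> S" by (rule S(1)[OF w1(1) w2(1)])
  have "w1 - w2 = (x - w2) - (x - w1)" using c1 c2 x by (intro eq_vecI) auto
  hence "(w1 - w2) \<bullet>c (w1 - w2) = ((x - w2) - (x - w1)) \<bullet>c (w1 - w2)"
    by (rule arg_cong[where f="\<lambda>u. u \<bullet>c (w1 - w2)"])
  also have "\<dots> = (x - w2) \<bullet>c (w1 - w2) - (x - w1) \<bullet>c (w1 - w2)"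
    by (rule cip_minus_l[where n=n]) (use c1 c2 x in auto)
  also have "\<dots> = 0" using w1(2) w2(2) dS by simp
  finally have z: "(w1 - w2) \<bullet>c (w1 - w2) = 0" .
  have "w1 - w2 \<in> carrier_vec n" using c1 c2 by simp
  from cip_self_zero[OF this z] have "w1 - w2 = 0\<^sub>v n" .
  thus ?thesis using c1 c2 by (rule vec_minus_zero[rotated 2])
qed

lemma W_minus: "a \<in> Sk n M n \<Longrightarrow> b \<in> Sk n M n \<Longrightarrow> a - b \<in> Sk n M n"
  by (rule Sk_minus[OF M])

lemma W_sub: "Sk n M n \<subseteq> carrier_vec n" using Sk_carrier[OF M] by auto

lemma projW: assumes x: "x \<in> carrier_vec n"
  shows "projW x \<in> Sk n M n" "\<forall>z\<in>Sk n M n. (x - projW x) \<bullet>c z = 0"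
proof -
  have ex: "\<exists>!w. w \<in> Sk n M n \<and> (\<forall>z\<in>Sk n M n. (x - w) \<bullet>c z = 0)"
    using proj_ex[OF le_refl x] proj_uniq_gen[OF W_minus W_sub x] by blast
  from theI'[OF ex] show "projW x \<in> Sk n M n" "\<forall>z\<in>Sk n M n. (x - projW x) \<bullet>c z = 0"
    unfolding projW_def by auto
qed

lemma projW_unique: assumes x: "x \<in> carrier_vec n" and w: "w \<in> Sk n M n" "\<forall>z\<in>Sk n M n. (x - w) \<bullet>c z = 0"
  shows "projW x = w"
  using proj_uniq_gen[OF W_minus W_sub x projW(1)[OF x] projW(2)[OF x] w] .

lemma projW_carrier: "x \<in> carrier_vec n \<Longrightarrow> projW x \<in> carrier_vec n"
  using projW(1) W_sub by auto

lemma projW_id: assumes "w \<in> Sk n M n" shows "projW w = w"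
proof -
  have c: "w \<in> carrier_vec n" using assms W_sub by auto
  have "\<forall>z\<in>Sk n M n. (w - w) \<bullet>c z = 0"
  proof
    fix z assume "z \<in> Sk n M n"
    hence zc: "z \<in> carrier_vec n" using W_sub by auto
    have "w - w = 0\<^sub>v n" using c by (intro eq_vecI) auto
    thus "(w - w) \<bullet>c z = 0" using cip_zero_l[OF zc] by simp
  qed
  thus ?thesis by (rule projW_unique[OF c assms])
qed

lemma projW_add: assumes x: "x \<in> carrier_vec n" and y: "y \<in> carrier_vec n"
  shows "projW (x + y) = projW x + projW y"
proof (rule projW_unique)
  show "x + y \<in> carrier_vec n" using x y by auto
  show "projW x + projW y \<in> Sk n M n" using projW(1)[OF x] projW(1)[OF y] Sk_add[OF M] by auto
  have cx: "projW x \<in> carrier_vec n" and cy: "projW y \<in> carrier_vec n" using projW_carrier x y by auto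
  show "\<forall>z\<in>Sk n M n. (x + y - (projW x + projW y)) \<bullet>c z = 0"
  proof
    fix z assume z: "z \<in> Sk n M n"
    have zc: "z \<in> carrier_vec n" using z W_sub by auto
    have "x + y - (projW x + projW y) = (x - projW x) + (y - projW y)"
      using x y cx cy by (intro eq_vecI) auto
    hence "(x + y - (projW x + projW y)) \<bullet>c z = (x - projW x) \<bullet>c z + (y - projW y) \<bullet>c z"
      using x y cx cy zc by (simp add: cip_add_l[of _ n])
    thus "(x + y - (projW x + projW y)) \<bullet>c z = 0" using projW(2)[OF x] projW(2)[OF y] z by simp
  qed
qed

lemma projW_smult: assumes x: "x \<in> carrier_vec n"
  shows "projW (c \<cdot>\<^sub>v x) = c \<cdot>\<^sub>v projW x"
proof (rule projW_unique)
  show "c \<cdot>\<^sub>v x \<in> carrier_vec n" using x by auto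
  show "c \<cdot>\<^sub>v projW x \<in> Sk n M n" using projW(1)[OF x] Sk_smult[OF M] by auto
  have cx: "projW x \<in> carrier_vec n" using projW_carrier x by auto
  show "\<forall>z\<in>Sk n M n. (c \<cdot>\<^sub>v x - c \<cdot>\<^sub>v projW x) \<bullet>c z = 0"
  proof
    fix z assume z: "z \<in> Sk n M n"
    have zc: "z \<in> carrier_vec n" using z W_sub by auto
    have "c \<cdot>\<^sub>v x - c \<cdot>\<^sub>v projW x = c \<cdot>\<^sub>v (x - projW x)"
      using x cx by (intro eq_vecI) (auto simp: algebra_simps)
    hence "(c \<cdot>\<^sub>v x - c \<cdot>\<^sub>v projW x) \<bullet>c z = c * ((x - projW x) \<bullet>c z)"
      using x cx zc by (simp add: cip_smult_l[of _ n])
    thus "(c \<cdot>\<^sub>v x - c \<cdot>\<^sub>v projW x) \<bullet>c z = 0" using projW(2)[OF x] z by simp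
  qed
qed

lemma projW_ip_l: assumes x: "x \<in> carrier_vec n" and z: "z \<in> Sk n M n"
  shows "projW x \<bullet>c z = x \<bullet>c z"
proof -
  have zc: "z \<in> carrier_vec n" using z W_sub by auto
  have cx: "projW x \<in> carrier_vec n" using projW_carrier x by auto
  have "(x - projW x) \<bullet>c z = 0" using projW(2)[OF x] z by auto
  thus ?thesis using cip_minus_l[OF x cx zc] by simp
qed

lemma projW_ip_r: assumes x: "x \<in> carrier_vec n" and z: "z \<in> Sk n M n"
  shows "z \<bullet>c projW x = z \<bullet>c x"
proof -
  have zc: "z \<in> carrier_vec n" using z W_sub by auto
  have cx: "projW x \<in> carrier_vec n" using projW_carrier x by auto
  show ?thesis using projW_ip_l[OF x z] cip_sym[OF zc cx] cip_sym[OF zc x] by simp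
qed

lemma projW_contr: assumes x: "x \<in> carrier_vec n" shows "vnorm (projW x) \<le> vnorm x"
proof -
  have cx: "projW x \<in> carrier_vec n" using projW_carrier x by auto
  have r: "x - projW x \<in> carrier_vec n" using x cx by auto
  have eq: "x = projW x + (x - projW x)" using x cx by (intro eq_vecI) auto
  have "x \<bullet>c x = (projW x + (x - projW x)) \<bullet>c (projW x + (x - projW x))" using eq by simp
  also have "\<dots> = projW x \<bullet>c projW x + projW x \<bullet>c (x - projW x) + ((x - projW x) \<bullet>c projW x + (x - projW x) \<bullet>c (x - projW x))"
    using cx r by (simp add: cip_add_l[of _ n] cip_add_r[of _ n])
  also have "(x - projW x) \<bullet>c projW x = 0" using projW x by auto
  also have "projW x \<bullet>c (x - projW x) = 0" using cip_sym[OF cx r] projW x by auto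
  finally have "Re (x \<bullet>c x) = Re (projW x \<bullet>c projW x) + Re ((x - projW x) \<bullet>c (x - projW x))" by simp
  hence "Re (projW x \<bullet>c projW x) \<le> Re (x \<bullet>c x)" using cip_self_nonneg[OF r] by linarith
  thus ?thesis unfolding vnorm_def by simp
qed

end


lemma mat_mult_idx: fixes A B :: "complex mat"
  assumes "A \<in> carrier_mat n m" "B \<in> carrier_mat m p" "i < n" "j < p"
  shows "(A * B) $$ (i,j) = (\<Sum>k<m. A $$ (i,k) * B $$ (k,j))"
proof -
  have "(A * B) $$ (i,j) = row A i \<bullet> col B j" using assms by simp
  also have "\<dots> = (\<Sum>k\<in>{0..<m}. row A i $ k * col B j $ k)" using assms unfolding scalar_prod_def by simp
  also have "\<dots> = (\<Sum>k<m. A $$ (i,k) * B $$ (k,j))" using assms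
    by (auto simp: lessThan_atLeast0 intro!: sum.cong)
  finally show ?thesis .
qed

lemma lin_mat: fixes f :: "complex vec \<Rightarrow> complex vec"
  assumes fc: "\<And>x. x \<in> carrier_vec n \<Longrightarrow> f x \<in> carrier_vec n"
  and fadd: "\<And>x y. x \<in> carrier_vec n \<Longrightarrow> y \<in> carrier_vec n \<Longrightarrow> f (x + y) = f x + f y"
  and fsm: "\<And>x c. x \<in> carrier_vec n \<Longrightarrow> f (c \<cdot>\<^sub>v x) = c \<cdot>\<^sub>v f x"
  and x: "x \<in> carrier_vec n"
  shows "f x = mat n n (\<lambda>(i,j). f (unit_vec n j) $ i) *\<^sub>v x"
proof -
  define tr where "tr k = vec n (\<lambda>i. if i < k then x $ i else 0)" for k
  have trc: "tr k \<in> carrier_vec n" for k unfolding tr_def by auto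
  have claim: "k \<le> n \<Longrightarrow> \<forall>i<n. f (tr k) $ i = (\<Sum>j<k. x $ j * f (unit_vec n j) $ i)" for k
  proof (induction k)
    case 0
    have "tr 0 = 0 \<cdot>\<^sub>v x" unfolding tr_def using x by (intro eq_vecI) auto
    hence "f (tr 0) = 0 \<cdot>\<^sub>v f x" using fsm[OF x] by simp
    thus ?case using fc[OF x] by auto
  next
    case (Suc k)
    have "tr (Suc k) = tr k + x $ k \<cdot>\<^sub>v unit_vec n k" unfolding tr_def using x Suc.prems
      by (intro eq_vecI) (auto simp: unit_vec_def less_Suc_eq)
    hence "f (tr (Suc k)) = f (tr k) + x $ k \<cdot>\<^sub>v f (unit_vec n k)"
      using fadd[OF trc, of "x $ k \<cdot>\<^sub>v unit_vec n k"] fsm[of "unit_vec n k" "x $ k"] by simp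
    moreover have "f (unit_vec n k) \<in> carrier_vec n" using fc by simp
    moreover have "f (tr k) \<in> carrier_vec n" using fc trc by simp
    ultimately show ?case using Suc by simp
  qed
  have "tr n = x" unfolding tr_def using x by (intro eq_vecI) auto
  hence "\<forall>i<n. f x $ i = (\<Sum>j<n. x $ j * f (unit_vec n j) $ i)" using claim[of n] by simp
  moreover have "(mat n n (\<lambda>(i,j). f (unit_vec n j) $ i) *\<^sub>v x) $ i = (\<Sum>j<n. f (unit_vec n j) $ i * x $ j)"
    if "i < n" for i
    using that x by (subst mat_vec_idx[of _ n n]) auto
  ultimately show ?thesis using fc[OF x] x
    by (intro eq_vecI) (auto simp: mult.commute)
qed

context fixes n :: nat and A B :: "complex mat"
  assumes A: "A \<in> carrier_mat n n" and B: "B \<in> carrier_mat n n"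
  and sa: "mat_adjoint (A * mat_adjoint B) = A * mat_adjoint B"
begin

lemma Bs: "mat_adjoint B \<in> carrier_mat n n" using adj_carrier[OF B] .
lemma As: "mat_adjoint A \<in> carrier_mat n n" using adj_carrier[OF A] .

lemma W_eq: "Sk n (mat_adjoint B) n = RanAdj n B"
  unfolding Sk_n[OF Bs] RanAdj_def ..

lemma W_elem: "w \<in> Sk n (mat_adjoint B) n \<Longrightarrow> \<exists>u\<in>carrier_vec n. w = mat_adjoint B *\<^sub>v u"
  unfolding Sk_n[OF Bs] by auto

lemma W_intro: "u \<in> carrier_vec n \<Longrightarrow> mat_adjoint B *\<^sub>v u \<in> Sk n (mat_adjoint B) n"
  unfolding Sk_n[OF Bs] by auto

lemma W_ker_orth: assumes w: "w \<in> Sk n (mat_adjoint B) n" and z: "z \<in> carrier_vec n" "B *\<^sub>v z = 0\<^sub>v n"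
  shows "w \<bullet>c z = 0"
proof -
  obtain u where u: "u \<in> carrier_vec n" "w = mat_adjoint B *\<^sub>v u" using W_elem[OF w] by auto
  have "w \<bullet>c z = u \<bullet>c (B *\<^sub>v z)" unfolding u(2) by (rule adj_ip[OF B u(1) z(1)])
  thus ?thesis using z(2) u(1) by (simp add: cip_zero_r)
qed

lemma resid_ker: assumes x: "x \<in> carrier_vec n"
  shows "B *\<^sub>v (x - projW n (mat_adjoint B) x) = 0\<^sub>v n"
proof -
  define r where "r = x - projW n (mat_adjoint B) x"
  have pc: "projW n (mat_adjoint B) x \<in> carrier_vec n" using projW_carrier[OF Bs x] .
  have rc: "r \<in> carrier_vec n" unfolding r_def using x pc by auto
  define u where "u = B *\<^sub>v r"
  have uc: "u \<in> carrier_vec n" unfolding u_def using B rc by auto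
  have "(mat_adjoint B *\<^sub>v u) \<bullet>c r = u \<bullet>c u" unfolding u_def by (rule adj_ip[OF B _ rc]) (use B rc in auto)
  moreover have "r \<bullet>c (mat_adjoint B *\<^sub>v u) = 0" unfolding r_def using projW(2)[OF Bs x] W_intro[OF uc] by auto
  moreover have "(mat_adjoint B *\<^sub>v u) \<bullet>c r = cnj (r \<bullet>c (mat_adjoint B *\<^sub>v u))"
    by (rule cip_sym[where n=n]) (use Bs uc rc in auto)
  ultimately have "u \<bullet>c u = 0" by simp
  thus ?thesis using cip_self_zero[OF uc] unfolding u_def r_def by simp
qed

lemma ker_minus: "a \<in> mat_kernel B \<Longrightarrow> b \<in> mat_kernel B \<Longrightarrow> a - b \<in> mat_kernel B"
proof -
  assume a: "a \<in> mat_kernel B" and b: "b \<in> mat_kernel B"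
  have ac: "a \<in> carrier_vec n" "B *\<^sub>v a = 0\<^sub>v n" using mat_kernelD[OF B a] by auto
  have bc: "b \<in> carrier_vec n" "B *\<^sub>v b = 0\<^sub>v n" using mat_kernelD[OF B b] by auto
  have "B *\<^sub>v (a - b) = B *\<^sub>v a - B *\<^sub>v b" using B ac bc by (simp add: mult_minus_distrib_mat_vec)
  hence "B *\<^sub>v (a - b) = 0\<^sub>v n" using ac bc by simp
  thus "a - b \<in> mat_kernel B" using B ac bc by (intro mat_kernelI) auto
qed

lemma projKer_eq: assumes x: "x \<in> carrier_vec n"
  shows "projKer B x = x - projW n (mat_adjoint B) x"
proof -
  let ?p = "projW n (mat_adjoint B) x"
  have pc: "?p \<in> carrier_vec n" using projW_carrier[OF Bs x] .
  have k1: "x - ?p \<in> mat_kernel B" using resid_ker[OF x] B x pc by (intro mat_kernelI) auto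
  have k2: "\<forall>z\<in>mat_kernel B. (x - (x - ?p)) \<bullet>c z = 0"
  proof
    fix z assume z: "z \<in> mat_kernel B"
    have "x - (x - ?p) = ?p" using x pc by (intro eq_vecI) auto
    thus "(x - (x - ?p)) \<bullet>c z = 0" using W_ker_orth[OF projW(1)[OF Bs x]] mat_kernelD[OF B z] by simp
  qed
  have ks: "mat_kernel B \<subseteq> carrier_vec n" using mat_kernel_carrier[OF B] .
  show ?thesis unfolding projKer_def orth_proj_def
  proof (rule the_equality)
    show "x - ?p \<in> mat_kernel B \<and> (\<forall>z\<in>mat_kernel B. (x - (x - ?p)) \<bullet>c z = 0)" using k1 k2 by auto
    fix y assume "y \<in> mat_kernel B \<and> (\<forall>z\<in>mat_kernel B. (x - y) \<bullet>c z = 0)"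
    thus "y = x - ?p" using proj_uniq_gen[OF Bs ker_minus ks x _ _ k1 k2] by blast
  qed
qed

lemma pKP: assumes x: "x \<in> carrier_vec n" shows "projKerPerp B x = projW n (mat_adjoint B) x"
proof -
  have pc: "projW n (mat_adjoint B) x \<in> carrier_vec n" using projW_carrier[OF Bs x] .
  show ?thesis unfolding projKerPerp_def projKer_eq[OF x] using x pc by (intro eq_vecI) auto
qed

lemma RanPperp_eq: "RanPperp n B = Sk n (mat_adjoint B) n"
proof
  show "RanPperp n B \<subseteq> Sk n (mat_adjoint B) n"
    unfolding RanPperp_def using pKP projW(1)[OF Bs] by auto
  show "Sk n (mat_adjoint B) n \<subseteq> RanPperp n B"
  proof
    fix w assume w: "w \<in> Sk n (mat_adjoint B) n"
    have wc: "w \<in> carrier_vec n" using w Sk_carrier[OF Bs] by auto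
    have "w = projKerPerp B w" using pKP[OF wc] projW_id[OF Bs w] by simp
    thus "w \<in> RanPperp n B" unfolding RanPperp_def using wc by auto
  qed
qed

lemma BAs: "B * mat_adjoint A = A * mat_adjoint B"
proof (rule eq_matI)
  show "dim_row (B * mat_adjoint A) = dim_row (A * mat_adjoint B)" using A B As Bs by simp
  show "dim_col (B * mat_adjoint A) = dim_col (A * mat_adjoint B)" using A B As Bs by simp
  fix i j assume "i < dim_row (A * mat_adjoint B)" "j < dim_col (A * mat_adjoint B)"
  hence i: "i < n" and j: "j < n" using A Bs by auto
  have ABs: "A * mat_adjoint B \<in> carrier_mat n n" using A Bs by auto
  have "(A * mat_adjoint B) $$ (i,j) = mat_adjoint (A * mat_adjoint B) $$ (i,j)" using sa by simp
  also have "\<dots> = cnj ((A * mat_adjoint B) $$ (j,i))" using adj_idx[OF ABs i j] .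
  also have "\<dots> = cnj (\<Sum>k<n. A $$ (j,k) * mat_adjoint B $$ (k,i))" using mat_mult_idx[OF A Bs j i] by simp
  also have "\<dots> = (\<Sum>k<n. B $$ (i,k) * cnj (A $$ (j,k)))"
    by (simp add: cnj_sum adj_idx[OF B _ i] mult.commute)
  also have "\<dots> = (\<Sum>k<n. B $$ (i,k) * mat_adjoint A $$ (k,j))"
    by (rule sum.cong[OF refl]) (simp add: adj_idx[OF A _ j])
  also have "\<dots> = (B * mat_adjoint A) $$ (i,j)" using mat_mult_idx[OF B As i j] by simp
  finally show "(B * mat_adjoint A) $$ (i,j) = (A * mat_adjoint B) $$ (i,j)" by simp
qed

lemma W_uniq: assumes y1: "y1 \<in> Sk n (mat_adjoint B) n" and y2: "y2 \<in> Sk n (mat_adjoint B) n"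
  and e: "B *\<^sub>v y1 = B *\<^sub>v y2" shows "y1 = y2"
proof -
  have c1: "y1 \<in> carrier_vec n" and c2: "y2 \<in> carrier_vec n" using y1 y2 Sk_carrier[OF Bs] by auto
  have dW: "y1 - y2 \<in> Sk n (mat_adjoint B) n" using Sk_minus[OF Bs y1 y2] .
  have dc: "y1 - y2 \<in> carrier_vec n" using c1 c2 by auto
  have "B *\<^sub>v (y1 - y2) = B *\<^sub>v y1 - B *\<^sub>v y2" using B c1 c2 by (simp add: mult_minus_distrib_mat_vec)
  hence "B *\<^sub>v (y1 - y2) = 0\<^sub>v n" using e B c2 by simp
  hence "(y1 - y2) \<bullet>c (y1 - y2) = 0" using W_ker_orth[OF dW dc] by simp
  hence "y1 - y2 = 0\<^sub>v n" using cip_self_zero[OF dc] by simp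
  thus ?thesis using c1 c2 by (rule vec_minus_zero[rotated 2])
qed

lemma Lop_exist: assumes x: "x \<in> carrier_vec n"
  shows "\<exists>y. y \<in> Sk n (mat_adjoint B) n \<and> B *\<^sub>v y = A *\<^sub>v projW n (mat_adjoint B) x"
proof -
  obtain u where u: "u \<in> carrier_vec n" "projW n (mat_adjoint B) x = mat_adjoint B *\<^sub>v u"
    using W_elem[OF projW(1)[OF Bs x]] by auto
  define v where "v = mat_adjoint A *\<^sub>v u"
  have vc: "v \<in> carrier_vec n" unfolding v_def using As u by auto
  define y where "y = projW n (mat_adjoint B) v"
  have yc: "y \<in> carrier_vec n" unfolding y_def using projW_carrier[OF Bs vc] .
  have "B *\<^sub>v (v - y) = 0\<^sub>v n" unfolding y_def by (rule resid_ker[OF vc])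
  moreover have "B *\<^sub>v (v - y) = B *\<^sub>v v - B *\<^sub>v y" using B vc yc by (simp add: mult_minus_distrib_mat_vec)
  ultimately have "B *\<^sub>v v - B *\<^sub>v y = 0\<^sub>v n" by simp
  hence "B *\<^sub>v v = B *\<^sub>v y" by (rule vec_minus_zero[rotated 2]) (use B vc yc in auto)
  hence "B *\<^sub>v y = B *\<^sub>v v" by simp
  also have "\<dots> = (B * mat_adjoint A) *\<^sub>v u" unfolding v_def using B As u by simp
  also have "\<dots> = (A * mat_adjoint B) *\<^sub>v u" by (simp add: BAs)
  also have "\<dots> = A *\<^sub>v projW n (mat_adjoint B) x" unfolding u(2) using A Bs u by simp
  finally show ?thesis using projW(1)[OF Bs vc] unfolding y_def by blast
qed

lemma Lop_char: assumes x: "x \<in> carrier_vec n"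
  shows "Lop n A B x \<in> Sk n (mat_adjoint B) n" "B *\<^sub>v Lop n A B x = A *\<^sub>v projW n (mat_adjoint B) x"
proof -
  obtain y0 where y0: "y0 \<in> Sk n (mat_adjoint B) n" "B *\<^sub>v y0 = A *\<^sub>v projW n (mat_adjoint B) x"
    using Lop_exist[OF x] by blast
  have ex: "\<exists>!y. y \<in> Sk n (mat_adjoint B) n \<and> B *\<^sub>v y = A *\<^sub>v projW n (mat_adjoint B) x"
  proof (rule ex1I[of _ y0])
    show "y0 \<in> Sk n (mat_adjoint B) n \<and> B *\<^sub>v y0 = A *\<^sub>v projW n (mat_adjoint B) x" using y0 by simp
    fix y assume "y \<in> Sk n (mat_adjoint B) n \<and> B *\<^sub>v y = A *\<^sub>v projW n (mat_adjoint B) x"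
    hence "y \<in> Sk n (mat_adjoint B) n" "B *\<^sub>v y = B *\<^sub>v y0" using y0 by auto
    thus "y = y0" using W_uniq[OF _ y0(1)] by simp
  qed
  have eqL: "Lop n A B x = (THE y. y \<in> Sk n (mat_adjoint B) n \<and> B *\<^sub>v y = A *\<^sub>v projW n (mat_adjoint B) x)"
    unfolding Lop_def W_eq[symmetric] pKP[OF x] ..
  have "(THE y. y \<in> Sk n (mat_adjoint B) n \<and> B *\<^sub>v y = A *\<^sub>v projW n (mat_adjoint B) x) \<in> Sk n (mat_adjoint B) n \<and>
        B *\<^sub>v (THE y. y \<in> Sk n (mat_adjoint B) n \<and> B *\<^sub>v y = A *\<^sub>v projW n (mat_adjoint B) x) = A *\<^sub>v projW n (mat_adjoint B) x"
    by (rule theI'[OF ex])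
  thus "Lop n A B x \<in> Sk n (mat_adjoint B) n" "B *\<^sub>v Lop n A B x = A *\<^sub>v projW n (mat_adjoint B) x"
    unfolding eqL by auto
qed

lemma Lop_unique: assumes x: "x \<in> carrier_vec n" and y: "y \<in> Sk n (mat_adjoint B) n"
  "B *\<^sub>v y = A *\<^sub>v projW n (mat_adjoint B) x" shows "Lop n A B x = y"
  using W_uniq[OF Lop_char(1)[OF x] y(1)] Lop_char(2)[OF x] y(2) by simp

lemma Lop_carrier: "x \<in> carrier_vec n \<Longrightarrow> Lop n A B x \<in> carrier_vec n"
  using Lop_char(1) Sk_carrier[OF Bs] by blast

lemma Lop_add: assumes x: "x \<in> carrier_vec n" and y: "y \<in> carrier_vec n"
  shows "Lop n A B (x + y) = Lop n A B x + Lop n A B y"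
proof (rule Lop_unique)
  show "x + y \<in> carrier_vec n" using x y by auto
  show "Lop n A B x + Lop n A B y \<in> Sk n (mat_adjoint B) n"
    using Sk_add[OF Bs Lop_char(1)[OF x] Lop_char(1)[OF y]] .
  have px: "projW n (mat_adjoint B) x \<in> carrier_vec n" and py: "projW n (mat_adjoint B) y \<in> carrier_vec n"
    using projW_carrier[OF Bs] x y by auto
  have "B *\<^sub>v (Lop n A B x + Lop n A B y) = B *\<^sub>v Lop n A B x + B *\<^sub>v Lop n A B y"
    using B Lop_carrier x y by (simp add: mult_add_distrib_mat_vec)
  also have "\<dots> = A *\<^sub>v projW n (mat_adjoint B) x + A *\<^sub>v projW n (mat_adjoint B) y"
    using Lop_char(2) x y by simp
  also have "\<dots> = A *\<^sub>v (projW n (mat_adjoint B) x + projW n (mat_adjoint B) y)"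
    using A px py by (simp add: mult_add_distrib_mat_vec)
  also have "\<dots> = A *\<^sub>v projW n (mat_adjoint B) (x + y)" using projW_add[OF Bs x y] by simp
  finally show "B *\<^sub>v (Lop n A B x + Lop n A B y) = A *\<^sub>v projW n (mat_adjoint B) (x + y)" .
qed

lemma Lop_smult: assumes x: "x \<in> carrier_vec n"
  shows "Lop n A B (c \<cdot>\<^sub>v x) = c \<cdot>\<^sub>v Lop n A B x"
proof (rule Lop_unique)
  show "c \<cdot>\<^sub>v x \<in> carrier_vec n" using x by auto
  show "c \<cdot>\<^sub>v Lop n A B x \<in> Sk n (mat_adjoint B) n" using Sk_smult[OF Bs Lop_char(1)[OF x]] .
  have px: "projW n (mat_adjoint B) x \<in> carrier_vec n" using projW_carrier[OF Bs] x by auto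
  have "B *\<^sub>v (c \<cdot>\<^sub>v Lop n A B x) = c \<cdot>\<^sub>v (B *\<^sub>v Lop n A B x)"
    using B Lop_carrier x by (simp add: mult_mat_vec)
  also have "\<dots> = c \<cdot>\<^sub>v (A *\<^sub>v projW n (mat_adjoint B) x)" using Lop_char(2) x by simp
  also have "\<dots> = A *\<^sub>v (c \<cdot>\<^sub>v projW n (mat_adjoint B) x)" using A px by (simp add: mult_mat_vec)
  also have "\<dots> = A *\<^sub>v projW n (mat_adjoint B) (c \<cdot>\<^sub>v x)" using projW_smult[OF Bs x] by simp
  finally show "B *\<^sub>v (c \<cdot>\<^sub>v Lop n A B x) = A *\<^sub>v projW n (mat_adjoint B) (c \<cdot>\<^sub>v x)" .
qed

lemma Lop_W: assumes u: "u \<in> carrier_vec n"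
  shows "Lop n A B (mat_adjoint B *\<^sub>v u) = projW n (mat_adjoint B) (mat_adjoint A *\<^sub>v u)"
proof (rule Lop_unique)
  show "mat_adjoint B *\<^sub>v u \<in> carrier_vec n" using Bs u by auto
  have vc: "mat_adjoint A *\<^sub>v u \<in> carrier_vec n" using As u by auto
  show "projW n (mat_adjoint B) (mat_adjoint A *\<^sub>v u) \<in> Sk n (mat_adjoint B) n" using projW(1)[OF Bs vc] .
  let ?v = "mat_adjoint A *\<^sub>v u"
  let ?y = "projW n (mat_adjoint B) ?v"
  have yc: "?y \<in> carrier_vec n" using projW_carrier[OF Bs vc] .
  have "B *\<^sub>v (?v - ?y) = 0\<^sub>v n" by (rule resid_ker[OF vc])
  moreover have "B *\<^sub>v (?v - ?y) = B *\<^sub>v ?v - B *\<^sub>v ?y" using B vc yc by (simp add: mult_minus_distrib_mat_vec)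
  ultimately have "B *\<^sub>v ?v - B *\<^sub>v ?y = 0\<^sub>v n" by simp
  hence "B *\<^sub>v ?v = B *\<^sub>v ?y" by (rule vec_minus_zero[rotated 2]) (use B vc yc in auto)
  hence "B *\<^sub>v ?y = B *\<^sub>v ?v" by simp
  also have "\<dots> = (B * mat_adjoint A) *\<^sub>v u" using B As u by simp
  also have "\<dots> = (A * mat_adjoint B) *\<^sub>v u" by (simp add: BAs)
  also have "\<dots> = A *\<^sub>v (mat_adjoint B *\<^sub>v u)" using A Bs u by simp
  also have "\<dots> = A *\<^sub>v projW n (mat_adjoint B) (mat_adjoint B *\<^sub>v u)"
    using projW_id[OF Bs W_intro[OF u]] by simp
  finally show "B *\<^sub>v ?y = A *\<^sub>v projW n (mat_adjoint B) (mat_adjoint B *\<^sub>v u)" .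
qed

lemma Lop_herm: assumes x: "x \<in> Sk n (mat_adjoint B) n" and y: "y \<in> Sk n (mat_adjoint B) n"
  shows "Lop n A B x \<bullet>c y = x \<bullet>c Lop n A B y"
proof -
  obtain u where u: "u \<in> carrier_vec n" "x = mat_adjoint B *\<^sub>v u" using W_elem[OF x] by auto
  obtain v where v: "v \<in> carrier_vec n" "y = mat_adjoint B *\<^sub>v v" using W_elem[OF y] by auto
  have yc: "y \<in> carrier_vec n" and xc: "x \<in> carrier_vec n" using x y Sk_carrier[OF Bs] by auto
  have Au: "mat_adjoint A *\<^sub>v u \<in> carrier_vec n" and Av: "mat_adjoint A *\<^sub>v v \<in> carrier_vec n"
    using As u v by auto
  have "Lop n A B x \<bullet>c y = projW n (mat_adjoint B) (mat_adjoint A *\<^sub>v u) \<bullet>c y"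
    unfolding u(2) Lop_W[OF u(1)] ..
  also have "\<dots> = (mat_adjoint A *\<^sub>v u) \<bullet>c y" by (rule projW_ip_l[OF Bs Au y])
  also have "\<dots> = u \<bullet>c (A *\<^sub>v y)" by (rule adj_ip[OF A u(1) yc])
  finally have l: "Lop n A B x \<bullet>c y = u \<bullet>c (A *\<^sub>v y)" .
  have "x \<bullet>c Lop n A B y = x \<bullet>c projW n (mat_adjoint B) (mat_adjoint A *\<^sub>v v)"
    unfolding v(2) Lop_W[OF v(1)] ..
  also have "\<dots> = x \<bullet>c (mat_adjoint A *\<^sub>v v)" by (rule projW_ip_r[OF Bs Av x])
  also have "\<dots> = u \<bullet>c (B *\<^sub>v (mat_adjoint A *\<^sub>v v))" unfolding u(2) by (rule adj_ip[OF B u(1) Av])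
  also have "B *\<^sub>v (mat_adjoint A *\<^sub>v v) = (B * mat_adjoint A) *\<^sub>v v" using B As v by simp
  also have "\<dots> = A *\<^sub>v y" unfolding BAs v(2) using A Bs v by simp
  finally show ?thesis using l by simp
qed

definition Lmat where "Lmat = mat n n (\<lambda>(i,j). Lop n A B (unit_vec n j) $ i)"

lemma Lmat: "Lmat \<in> carrier_mat n n" unfolding Lmat_def by simp

lemma Lop_Lmat: "x \<in> carrier_vec n \<Longrightarrow> Lop n A B x = Lmat *\<^sub>v x"
  unfolding Lmat_def by (rule lin_mat[OF Lop_carrier Lop_add Lop_smult])

end


abbreviation "cq \<equiv> complex_of_real (1 / sqrt 2)"

lemma cq_sq: "cq * cq = 1/2"
proof -
  have "cq * cq = complex_of_real ((1 / sqrt 2) * (1 / sqrt 2))" by (simp only: of_real_mult)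
  also have s: "sqrt 2 * sqrt 2 = (2::real)" by simp
  have "(1 / sqrt 2) * (1 / sqrt 2) = 1 / (sqrt 2 * sqrt 2)" by simp
  hence "(1 / sqrt 2) * (1 / sqrt 2) = (1/2 :: real)" using s by simp
  finally show ?thesis by simp
qed

lemma alg1_gen: "(c::complex) * (c * (a + b) + c * (a - b)) = (c * c) * (2 * a)"
  by (simp add: algebra_simps)
lemma alg2_gen: "(c::complex) * (c * (a + b) - c * (a - b)) = (c * c) * (2 * b)"
  by (simp add: algebra_simps)

context fixes nE nI :: nat
begin

lemma Q_carrier: "Qmat nE nI \<in> carrier_mat (nE + 2*nI) (nE + 2*nI)"
  unfolding Qmat_def by simp

lemma D_carrier: "Dmat nE nI a k \<in> carrier_mat (nE + 2*nI) (nE + 2*nI)"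
  unfolding Dmat_def by simp

lemma M_carrier: "Mmat nE nI a k \<in> carrier_mat (nE + 2*nI) (nE + 2*nI)"
  unfolding Mmat_def using Q_carrier D_carrier by auto

lemma Qmult: assumes x: "x \<in> carrier_vec (nE + 2*nI)" and i: "i < nE + 2*nI"
  shows "(Qmat nE nI *\<^sub>v x) $ i = (if i < nE then x$i else if i < nE + nI then cq * (x$i + x$(i+nI))
          else cq * (x$(i-nI) - x$i))"
proof -
  let ?n = "nE + 2*nI"
  have e: "(Qmat nE nI *\<^sub>v x) $ i = (\<Sum>j<?n. Qmat nE nI $$ (i,j) * x $ j)"
    by (rule mat_vec_idx[OF Q_carrier x i])
  show ?thesis
  proof (cases "i < nE")
    case True
    have "(\<Sum>j<?n. Qmat nE nI $$ (i,j) * x $ j) = (\<Sum>j<?n. if j = i then x $ i else 0)"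
      by (rule sum.cong[OF refl]) (use True i in \<open>auto simp: Qmat_def\<close>)
    thus ?thesis using e True i by simp
  next
    case F: False
    show ?thesis
    proof (cases "i < nE + nI")
      case True
      have "(\<Sum>j<?n. Qmat nE nI $$ (i,j) * x $ j) =
            (\<Sum>j<?n. (if j = i then cq * x $ i else 0) + (if j = i + nI then cq * x $ (i + nI) else 0))"
        by (rule sum.cong[OF refl]) (use True F i in \<open>auto simp: Qmat_def\<close>)
      also have "\<dots> = cq * x $ i + cq * x $ (i + nI)" using True i by (simp add: sum.distrib)
      finally show ?thesis using e True F by (simp add: distrib_left)
    next
      case False
      have "(\<Sum>j<?n. Qmat nE nI $$ (i,j) * x $ j) =
            (\<Sum>j<?n. (if j = i - nI then cq * x $ (i - nI) else 0) + (if j = i then - cq * x $ i else 0))"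
        by (rule sum.cong[OF refl]) (use False F i in \<open>auto simp: Qmat_def\<close>)
      also have "\<dots> = cq * x $ (i - nI) - cq * x $ i" using False i by (simp add: sum.distrib)
      finally show ?thesis using e False F by (simp add: right_diff_distrib)
    qed
  qed
qed

lemma Q_adj: "mat_adjoint (Qmat nE nI) = Qmat nE nI"
proof (rule eq_matI)
  let ?n = "nE + 2*nI"
  have QA: "mat_adjoint (Qmat nE nI) \<in> carrier_mat ?n ?n" using adj_carrier[OF Q_carrier] .
  show "dim_row (mat_adjoint (Qmat nE nI)) = dim_row (Qmat nE nI)" using QA Q_carrier by simp
  show "dim_col (mat_adjoint (Qmat nE nI)) = dim_col (Qmat nE nI)" using QA Q_carrier by simp
  fix i j assume "i < dim_row (Qmat nE nI)" "j < dim_col (Qmat nE nI)"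
  hence i: "i < ?n" and j: "j < ?n" using Q_carrier by auto
  show "mat_adjoint (Qmat nE nI) $$ (i,j) = Qmat nE nI $$ (i,j)"
    unfolding adj_idx[OF Q_carrier i j] using i j by (auto simp: Qmat_def)
qed

lemma QQ: assumes x: "x \<in> carrier_vec (nE + 2*nI)"
  shows "Qmat nE nI *\<^sub>v (Qmat nE nI *\<^sub>v x) = x"
proof (rule eq_vecI)
  let ?n = "nE + 2*nI"
  have qx: "Qmat nE nI *\<^sub>v x \<in> carrier_vec ?n" using Q_carrier x by auto
  show "dim_vec (Qmat nE nI *\<^sub>v (Qmat nE nI *\<^sub>v x)) = dim_vec x" using x Q_carrier by simp
  fix i assume "i < dim_vec x"
  hence i: "i < ?n" using x by auto
  have alg1: "cq * (cq * (a + b) + cq * (a - b)) = a" for a b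
    unfolding alg1_gen[of cq a b] cq_sq by simp
  have alg2: "cq * (cq * (a + b) - cq * (a - b)) = b" for a b
    unfolding alg2_gen[of cq a b] cq_sq by simp
  show "(Qmat nE nI *\<^sub>v (Qmat nE nI *\<^sub>v x)) $ i = x $ i"
  proof (cases "i < nE")
    case True thus ?thesis using Qmult[OF qx i] Qmult[OF x i] by simp
  next
    case F: False
    show ?thesis
    proof (cases "i < nE + nI")
      case True
      have i2: "i + nI < ?n" using True by simp
      have q1: "(Qmat nE nI *\<^sub>v x) $ i = cq * (x$i + x$(i+nI))" using Qmult[OF x i] True F by simp
      have q2: "(Qmat nE nI *\<^sub>v x) $ (i + nI) = cq * (x$i - x$(i+nI))" using Qmult[OF x i2] True F by simp
      have "(Qmat nE nI *\<^sub>v (Qmat nE nI *\<^sub>v x)) $ i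
            = cq * ((Qmat nE nI *\<^sub>v x) $ i + (Qmat nE nI *\<^sub>v x) $ (i + nI))"
        using Qmult[OF qx i] True F by simp
      also have "\<dots> = cq * (cq * (x$i + x$(i+nI)) + cq * (x$i - x$(i+nI)))"
        unfolding q1 q2 ..
      finally show ?thesis using alg1 by simp
    next
      case False
      have i2: "i - nI < ?n" using i by simp
      have i3: "i - nI + nI = i" using False by simp
      have i4: "i - nI < nE + nI" "\<not> i - nI < nE" using False i by auto
      have q1: "(Qmat nE nI *\<^sub>v x) $ (i - nI) = cq * (x$(i-nI) + x$i)"
        using Qmult[OF x i2] i3 i4 by simp
      have q2: "(Qmat nE nI *\<^sub>v x) $ i = cq * (x$(i-nI) - x$i)" using Qmult[OF x i] False F by simp
      have "(Qmat nE nI *\<^sub>v (Qmat nE nI *\<^sub>v x)) $ i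
            = cq * ((Qmat nE nI *\<^sub>v x) $ (i - nI) - (Qmat nE nI *\<^sub>v x) $ i)"
        using Qmult[OF qx i] False F by simp
      also have "\<dots> = cq * (cq * (x$(i-nI) + x$i) - cq * (x$(i-nI) - x$i))"
        unfolding q1 q2 ..
      finally show ?thesis using alg2 by simp
    qed
  qed
qed

lemma Q_ip: assumes w: "w \<in> carrier_vec (nE + 2*nI)" and z: "z \<in> carrier_vec (nE + 2*nI)"
  shows "(Qmat nE nI *\<^sub>v w) \<bullet>c z = w \<bullet>c (Qmat nE nI *\<^sub>v z)"
  using adj_ip[OF Q_carrier w z] unfolding Q_adj .

lemma Q_norm: assumes x: "x \<in> carrier_vec (nE + 2*nI)"
  shows "(Qmat nE nI *\<^sub>v x) \<bullet>c (Qmat nE nI *\<^sub>v x) = x \<bullet>c x"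
proof -
  have qx: "Qmat nE nI *\<^sub>v x \<in> carrier_vec (nE + 2*nI)" using Q_carrier x by auto
  have "(Qmat nE nI *\<^sub>v (Qmat nE nI *\<^sub>v x)) \<bullet>c x = (Qmat nE nI *\<^sub>v x) \<bullet>c (Qmat nE nI *\<^sub>v x)"
    by (rule Q_ip[OF qx x])
  thus ?thesis using QQ[OF x] by simp
qed

lemma Q_inj: assumes x: "x \<in> carrier_vec (nE + 2*nI)" and nz: "x \<noteq> 0\<^sub>v (nE + 2*nI)"
  shows "Qmat nE nI *\<^sub>v x \<noteq> 0\<^sub>v (nE + 2*nI)"
proof
  assume "Qmat nE nI *\<^sub>v x = 0\<^sub>v (nE + 2*nI)"
  hence "Qmat nE nI *\<^sub>v (Qmat nE nI *\<^sub>v x) = 0\<^sub>v (nE + 2*nI)"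
    using Q_carrier by (intro eq_vecI) (auto simp: mat_vec_idx[OF Q_carrier])
  thus False using QQ[OF x] nz by simp
qed

lemma Dmult: assumes y: "y \<in> carrier_vec (nE + 2*nI)" and k: "k < nE + 2*nI"
  shows "(Dmat nE nI a t *\<^sub>v y) $ k = complex_of_real (Dentry nE nI a t k) * y $ k"
proof -
  have "(Dmat nE nI a t *\<^sub>v y) $ k = (\<Sum>j<nE + 2*nI. Dmat nE nI a t $$ (k,j) * y $ j)"
    by (rule mat_vec_idx[OF D_carrier y k])
  also have "\<dots> = (\<Sum>j<nE + 2*nI. if j = k then complex_of_real (Dentry nE nI a t k) * y $ k else 0)"
    by (rule sum.cong[OF refl]) (use k in \<open>auto simp: Dmat_def\<close>)
  also have "\<dots> = complex_of_real (Dentry nE nI a t k) * y $ k" using k by simp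
  finally show ?thesis .
qed

lemma M_ip: assumes x: "x \<in> carrier_vec (nE + 2*nI)" and y: "y \<in> carrier_vec (nE + 2*nI)"
  shows "(Mmat nE nI a t *\<^sub>v x) \<bullet>c y =
    (\<Sum>k<nE + 2*nI. complex_of_real (Dentry nE nI a t k) * ((Qmat nE nI *\<^sub>v x) $ k * cnj ((Qmat nE nI *\<^sub>v y) $ k)))"
proof -
  let ?n = "nE + 2*nI"
  let ?Q = "Qmat nE nI" and ?D = "Dmat nE nI a t"
  have qx: "?Q *\<^sub>v x \<in> carrier_vec ?n" and qy: "?Q *\<^sub>v y \<in> carrier_vec ?n" using Q_carrier x y by auto
  have dqx: "?D *\<^sub>v (?Q *\<^sub>v x) \<in> carrier_vec ?n" using mult_mat_vec_carrier[OF D_carrier qx] .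
  have QD: "?Q * ?D \<in> carrier_mat ?n ?n" using Q_carrier D_carrier by auto
  have "Mmat nE nI a t *\<^sub>v x = (?Q * ?D) *\<^sub>v (?Q *\<^sub>v x)"
    unfolding Mmat_def by (rule assoc_mult_mat_vec[OF QD Q_carrier x])
  also have "\<dots> = ?Q *\<^sub>v (?D *\<^sub>v (?Q *\<^sub>v x))"
    by (rule assoc_mult_mat_vec[OF Q_carrier D_carrier qx])
  finally have "Mmat nE nI a t *\<^sub>v x = ?Q *\<^sub>v (?D *\<^sub>v (?Q *\<^sub>v x))" .
  hence "(Mmat nE nI a t *\<^sub>v x) \<bullet>c y = (?D *\<^sub>v (?Q *\<^sub>v x)) \<bullet>c (?Q *\<^sub>v y)"
    using Q_ip[OF dqx y] by simp
  also have "\<dots> = (\<Sum>k<?n. (?D *\<^sub>v (?Q *\<^sub>v x)) $ k * cnj ((?Q *\<^sub>v y) $ k))"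
    by (rule cip[OF dqx qy])
  also have "\<dots> = (\<Sum>k<?n. complex_of_real (Dentry nE nI a t k) * ((?Q *\<^sub>v x) $ k * cnj ((?Q *\<^sub>v y) $ k)))"
    by (rule sum.cong[OF refl]) (simp add: Dmult[OF qx])
  finally show ?thesis .
qed

lemma M_herm: assumes x: "x \<in> carrier_vec (nE + 2*nI)" and y: "y \<in> carrier_vec (nE + 2*nI)"
  shows "(Mmat nE nI a t *\<^sub>v x) \<bullet>c y = x \<bullet>c (Mmat nE nI a t *\<^sub>v y)"
proof -
  have My: "Mmat nE nI a t *\<^sub>v y \<in> carrier_vec (nE + 2*nI)" using mult_mat_vec_carrier[OF M_carrier y] .
  have "x \<bullet>c (Mmat nE nI a t *\<^sub>v y) = cnj ((Mmat nE nI a t *\<^sub>v y) \<bullet>c x)" by (rule cip_sym[OF x My])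
  also have "\<dots> = (\<Sum>k<nE + 2*nI. complex_of_real (Dentry nE nI a t k) * ((Qmat nE nI *\<^sub>v x) $ k * cnj ((Qmat nE nI *\<^sub>v y) $ k)))"
    unfolding M_ip[OF y x] by (simp add: cnj_sum mult_ac)
  finally show ?thesis using M_ip[OF x y] by simp
qed

lemma M_quad: assumes x: "x \<in> carrier_vec (nE + 2*nI)"
  shows "Re ((Mmat nE nI a t *\<^sub>v x) \<bullet>c x) = (\<Sum>k<nE + 2*nI. Dentry nE nI a t k * (cmod ((Qmat nE nI *\<^sub>v x) $ k))\<^sup>2)"
proof -
  have "(Mmat nE nI a t *\<^sub>v x) \<bullet>c x = (\<Sum>k<nE + 2*nI. complex_of_real (Dentry nE nI a t k * (cmod ((Qmat nE nI *\<^sub>v x) $ k))\<^sup>2))"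
    unfolding M_ip[OF x x] by (rule sum.cong[OF refl]) (simp add: complex_norm_square[symmetric])
  thus ?thesis by (simp add: Re_sum)
qed

lemma Q_sumsq: assumes x: "x \<in> carrier_vec (nE + 2*nI)"
  shows "(\<Sum>k<nE + 2*nI. (cmod ((Qmat nE nI *\<^sub>v x) $ k))\<^sup>2) = (vnorm x)\<^sup>2"
proof -
  have qx: "Qmat nE nI *\<^sub>v x \<in> carrier_vec (nE + 2*nI)" using Q_carrier x by auto
  show ?thesis unfolding vnorm_sq[OF x] Q_norm[OF x, symmetric] cip_self_Re[OF qx] ..
qed

end


lemma psi_pos: fixes t :: real assumes t: "t > 0" shows "sinh t < t * cosh t"
proof -
  let ?f = "\<lambda>x::real. x * cosh x - sinh x"
  have "?f 0 < ?f t"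
  proof (rule DERIV_pos_imp_increasing_open[OF t])
    fix x :: real assume x: "0 < x" "x < t"
    have "DERIV ?f x :> x * sinh x"
      by (auto intro!: derivative_eq_intros)
    moreover have "x * sinh x > 0" using x by simp
    ultimately show "\<exists>y. DERIV ?f x :> y \<and> y > 0" by blast
  next
    show "continuous_on {0..t} ?f" by (intro continuous_intros)
  qed
  thus ?thesis by simp
qed

definition hfun :: "real \<Rightarrow> real" where "hfun x = x * cosh x / sinh x"

lemma hfun_gt1: "t > 0 \<Longrightarrow> hfun t > 1"
  unfolding hfun_def using psi_pos[of t] by (simp add: field_simps)

lemma sc_gt: fixes x :: real assumes x: "x > 0" shows "sinh x * cosh x - x > 0"
proof -
  have "x \<le> (exp x - inverse (exp x)) / 2" by (rule real_le_x_sinh) (use x in simp)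
  moreover have "sinh x = (exp x - inverse (exp x)) / 2" by (simp add: sinh_field_def exp_minus)
  ultimately have "x \<le> sinh x" by simp
  hence "x * cosh x \<le> sinh x * cosh x" by (intro mult_right_mono) auto
  moreover have "cosh x > 1" using cosh_real_ge_1[of x] cosh_real_one_iff[of x] x by linarith
  hence "x < x * cosh x" using x by simp
  ultimately show ?thesis by linarith
qed

lemma hfun_mono: fixes s t :: real assumes s: "0 < s" and st: "s < t" shows "hfun s < hfun t"
proof (unfold hfun_def, rule DERIV_pos_imp_increasing[OF st])
  fix x :: real assume x: "s \<le> x" "x \<le> t"
  hence xp: "x > 0" using s by simp
  have sh: "sinh x \<noteq> 0" using xp by simp
  have "DERIV (\<lambda>x. x * cosh x / sinh x) x :> ((cosh x + x * sinh x) * sinh x - x * cosh x * cosh x) / (sinh x * sinh x)"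
    using sh by (auto intro!: derivative_eq_intros simp: power2_eq_square)
  moreover have "((cosh x + x * sinh x) * sinh x - x * cosh x * cosh x) = sinh x * cosh x - x"
  proof -
    have "cosh x * cosh x = sinh x * sinh x + 1" using cosh_square_eq[of x] by (simp add: power2_eq_square)
    thus ?thesis by (simp add: algebra_simps)
  qed
  moreover have "sinh x * cosh x - x > 0" using sc_gt[OF xp] .
  moreover have "sinh x * sinh x > 0" using xp by simp
  ultimately show "\<exists>y. DERIV (\<lambda>x. x * cosh x / sinh x) x :> y \<and> y > 0" by auto
qed

lemma ktanh: fixes k b :: real assumes b: "b > 0" and k: "k \<noteq> 0"
  shows "k / tanh (k * b / 2) = (2 / b) * hfun (k * b / 2)"
  unfolding hfun_def tanh_def using b k by (simp add: field_simps)

context fixes nE nI :: nat and a :: "nat \<Rightarrow> real"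
  assumes a_pos: "\<forall>i < nI. a i > 0"
begin

lemma D_decr: assumes k: "k < nE + 2*nI" and s: "0 \<le> s" and st: "s < t"
  shows "Dentry nE nI a t k < Dentry nE nI a s k"
proof -
  have t: "t > 0" using s st by simp
  consider "k < nE" | "nE \<le> k" "k < nE + nI" | "nE + nI \<le> k" by linarith
  thus ?thesis
  proof cases
    case 1 thus ?thesis using st by (simp add: Dentry_def)
  next
    case 2
    define b where "b = a (k - nE)"
    have b: "b > 0" unfolding b_def using a_pos 2 by auto
    have tp: "tanh (t * b / 2) > 0" using t b by simp
    have "tanh (s * b / 2) \<le> tanh (t * b / 2)"
      using strict_mono_less_eq[OF tanh_real_strict_mono] st b by (simp add: divide_right_mono)
    hence "s * tanh (s * b / 2) \<le> s * tanh (t * b / 2)" using s by (rule mult_left_mono)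
    also have "\<dots> < t * tanh (t * b / 2)" using st tp by simp
    finally show ?thesis using 2 unfolding Dentry_def b_def by simp
  next
    case 3
    define b where "b = a (k - nE - nI)"
    have b: "b > 0" unfolding b_def using a_pos 3 k by auto
    have "2 / b < t / tanh (t * b / 2)"
    proof (cases "s = 0")
      case True
      have "hfun (t * b / 2) > 1" using hfun_gt1 t b by simp
      hence "2 / b * 1 < 2 / b * hfun (t * b / 2)" using b by (intro mult_strict_left_mono) auto
      thus ?thesis using ktanh[OF b, of t] t by simp
    next
      case False
      hence sp: "s > 0" using s by simp
      have "hfun (s * b / 2) < hfun (t * b / 2)" using hfun_mono sp st b by simp
      hence "2 / b * hfun (s * b / 2) < 2 / b * hfun (t * b / 2)" using b by (intro mult_strict_left_mono) auto
      moreover have "2 / b * 1 \<le> 2 / b * hfun (s * b / 2)"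
        using hfun_gt1[of "s * b / 2"] sp b by (intro mult_left_mono) auto
      ultimately show ?thesis using ktanh[OF b, of t] t by simp
    qed
    moreover have "s / tanh (s * b / 2) < t / tanh (t * b / 2)" if sp: "s > 0"
    proof -
      have "hfun (s * b / 2) < hfun (t * b / 2)" using hfun_mono sp st b by simp
      hence "2 / b * hfun (s * b / 2) < 2 / b * hfun (t * b / 2)" using b by (intro mult_strict_left_mono) auto
      thus ?thesis using ktanh[OF b, of t] ktanh[OF b, of s] t sp by simp
    qed
    ultimately show ?thesis using 3 t s unfolding Dentry_def b_def by (auto simp: not_less)
  qed
qed

lemma lim_third: fixes b :: real assumes b: "b > 0"
  shows "((\<lambda>k. k / tanh (k * b / 2)) \<longlongrightarrow> 2 / b) (at 0)"
proof -
  have d: "((\<lambda>k. sinh (k * b / 2)) has_field_derivative (b / 2)) (at 0)"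
    by (auto intro!: derivative_eq_intros)
  hence l1: "((\<lambda>k. sinh (k * b / 2) / k) \<longlongrightarrow> b / 2) (at 0)"
    unfolding has_field_derivative_iff by simp
  have l2: "((\<lambda>k. cosh (k * b / 2)) \<longlongrightarrow> 1) (at 0)"
  proof -
    have "isCont (\<lambda>k::real. cosh (k * b / 2)) 0" by (auto intro!: continuous_intros)
    thus ?thesis unfolding isCont_def by simp
  qed
  have "((\<lambda>k. cosh (k * b / 2) / (sinh (k * b / 2) / k)) \<longlongrightarrow> 1 / (b / 2)) (at 0)"
    by (rule tendsto_divide[OF l2 l1]) (use b in simp)
  moreover have "eventually (\<lambda>k. cosh (k * b / 2) / (sinh (k * b / 2) / k) = k / tanh (k * b / 2)) (at 0)"
    unfolding eventually_at_filter by (auto simp: tanh_def field_simps)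
  ultimately show ?thesis using tendsto_cong by (force simp: field_simps)
qed

lemma D_cont: assumes k: "k < nE + 2*nI" shows "isCont (\<lambda>t. Dentry nE nI a t k) t0"
proof -
  consider "k < nE" | "nE \<le> k" "k < nE + nI" | "nE + nI \<le> k" by linarith
  thus ?thesis
  proof cases
    case 1 thus ?thesis by (simp add: Dentry_def)
  next
    case 2 thus ?thesis unfolding Dentry_def by (simp; intro continuous_intros; simp)
  next
    case 3
    define b where "b = a (k - nE - nI)"
    have b: "b > 0" unfolding b_def using a_pos 3 k by auto
    have eq: "(\<lambda>t. Dentry nE nI a t k) = (\<lambda>t. if t = 0 then - 2 / b else - t / tanh (t * b / 2))"
      using 3 unfolding Dentry_def b_def by auto
    show ?thesis unfolding eq
    proof (cases "t0 = 0")
      case True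
      have "((\<lambda>t. - (t / tanh (t * b / 2))) \<longlongrightarrow> - (2 / b)) (at 0)"
        by (intro tendsto_minus lim_third b)
      moreover have ev: "eventually (\<lambda>t. - (t / tanh (t * b / 2)) = (if t = 0 then - 2 / b else - t / tanh (t * b / 2))) (at 0)"
        by (auto simp: eventually_at_filter)
      ultimately have L: "((\<lambda>t. if t = 0 then - 2 / b else - t / tanh (t * b / 2)) \<longlongrightarrow> - (2 / b)) (at 0)"
        using tendsto_cong[OF ev] by blast
      thus "isCont (\<lambda>t. if t = 0 then - 2 / b else - t / tanh (t * b / 2)) t0"
        unfolding isCont_def True by simp
    next
      case False
      have ev: "eventually (\<lambda>t. t \<in> - {0::real}) (nhds t0)"
        by (rule eventually_nhds_in_open) (use False in auto)
      have "isCont (\<lambda>t. - t / tanh (t * b / 2)) t0"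
        using False b by (intro continuous_intros) auto
      moreover have evx: "eventually (\<lambda>t. (if t = 0 then - 2 / b else - t / tanh (t * b / 2)) = - t / tanh (t * b / 2)) (nhds t0)"
        using ev by (rule eventually_mono) auto
      ultimately show "isCont (\<lambda>t. if t = 0 then - 2 / b else - t / tanh (t * b / 2)) t0"
        using isCont_cong[OF evx] by simp
    qed
  qed
qed

lemma tanh_ge_half: fixes x :: real assumes "x \<ge> 1" shows "tanh x \<ge> 1/2"
proof -
  have "exp (2 :: real) \<ge> 3" using exp_ge_add_one_self[of 2] by simp
  have "exp (- 2 * x) \<le> exp (-2)" using assms by simp
  also have "exp (-2 :: real) = 1 / exp 2" by (simp add: exp_minus field_simps)
  also have "\<dots> \<le> 1/3" using \<open>exp 2 \<ge> 3\<close> by (simp add: field_simps)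
  finally have e: "exp (- 2 * x) \<le> 1/3" .
  have "tanh x = (1 - exp (- 2 * x)) / (1 + exp (- 2 * x))" by (rule tanh_real_altdef)
  moreover have pos: "1 + exp (- 2 * x) > 0" by (simp add: add_pos_pos)
  moreover have "1/2 * (1 + exp (- 2 * x)) \<le> 1 - exp (- 2 * x)" using e by simp
  ultimately show ?thesis by (simp add: le_divide_eq)
qed

lemma D_bound: assumes k: "k < nE + 2*nI" and C: "C \<ge> 0"
  and g: "\<gamma> = 2 * (C + 1) + (\<Sum>i<nI. 2 / a i)"
  shows "Dentry nE nI a \<gamma> k \<le> - (C + 1)"
proof -
  have sn: "(\<Sum>i<nI. 2 / a i) \<ge> 0" using a_pos by (intro sum_nonneg) auto
  have gC: "\<gamma> \<ge> 2 * (C + 1)" using g sn by simp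
  have gp: "\<gamma> > 0" using gC C by simp
  have gi: "\<gamma> \<ge> 2 / a i" if "i < nI" for i
  proof -
    have "2 / a i \<le> (\<Sum>i<nI. 2 / a i)" using that a_pos by (intro member_le_sum) auto
    thus ?thesis using g C by simp
  qed
  consider "k < nE" | "nE \<le> k" "k < nE + nI" | "nE + nI \<le> k" by linarith
  thus ?thesis
  proof cases
    case 1 thus ?thesis using gC C by (simp add: Dentry_def)
  next
    case 2
    define b where "b = a (k - nE)"
    have b: "b > 0" unfolding b_def using a_pos 2 by auto
    have "\<gamma> \<ge> 2 / b" unfolding b_def using gi 2 by simp
    hence "\<gamma> * b \<ge> 2" using b by (simp add: field_simps)
    hence "\<gamma> * b / 2 \<ge> 1" by simp
    hence th: "tanh (\<gamma> * b / 2) \<ge> 1/2" by (rule tanh_ge_half)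
    have "\<gamma> * (1/2) \<le> \<gamma> * tanh (\<gamma> * b / 2)" using th gp by (intro mult_left_mono) auto
    thus ?thesis using 2 gC unfolding Dentry_def b_def by simp
  next
    case 3
    define b where "b = a (k - nE - nI)"
    have b: "b > 0" unfolding b_def using a_pos 3 k by auto
    have tp: "tanh (\<gamma> * b / 2) > 0" using gp b by simp
    have t1: "tanh (\<gamma> * b / 2) < 1" by (rule tanh_real_lt_1)
    have "\<gamma> \<le> \<gamma> / tanh (\<gamma> * b / 2)" using tp t1 gp by (simp add: field_simps)
    thus ?thesis using 3 gC gp C unfolding Dentry_def b_def by simp
  qed
qed

end


lemma vnorm_zero: "vnorm (0\<^sub>v n) = 0"
  unfolding vnorm_def by (simp add: cip_zero_l[of "0\<^sub>v n" n])

lemma M_entry: "i < nE + 2*nI \<Longrightarrow> j < nE + 2*nI \<Longrightarrow>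
  Mmat nE nI a t $$ (i,j) = (\<Sum>k<nE + 2*nI. Qmat nE nI $$ (i,k) * complex_of_real (Dentry nE nI a t k) * Qmat nE nI $$ (k,j))"
proof -
  assume i: "i < nE + 2*nI" and j: "j < nE + 2*nI"
  let ?N = "nE + 2*nI"
  have QD: "Qmat nE nI * Dmat nE nI a t \<in> carrier_mat ?N ?N" using mult_carrier_mat[OF Q_carrier D_carrier] .
  have qd: "(Qmat nE nI * Dmat nE nI a t) $$ (i,k) = Qmat nE nI $$ (i,k) * complex_of_real (Dentry nE nI a t k)"
    if k: "k < ?N" for k
  proof -
    have "(Qmat nE nI * Dmat nE nI a t) $$ (i,k) = (\<Sum>l<?N. Qmat nE nI $$ (i,l) * Dmat nE nI a t $$ (l,k))"
      by (rule mat_mult_idx[OF Q_carrier D_carrier i k])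
    also have "\<dots> = (\<Sum>l<?N. if l = k then Qmat nE nI $$ (i,k) * complex_of_real (Dentry nE nI a t k) else 0)"
      by (rule sum.cong[OF refl]) (use k in \<open>auto simp: Dmat_def\<close>)
    also have "\<dots> = Qmat nE nI $$ (i,k) * complex_of_real (Dentry nE nI a t k)" using k by simp
    finally show ?thesis .
  qed
  have "Mmat nE nI a t $$ (i,j) = (\<Sum>k<?N. (Qmat nE nI * Dmat nE nI a t) $$ (i,k) * Qmat nE nI $$ (k,j))"
    unfolding Mmat_def by (rule mat_mult_idx[OF QD Q_carrier i j])
  also have "\<dots> = (\<Sum>k<?N. Qmat nE nI $$ (i,k) * complex_of_real (Dentry nE nI a t k) * Qmat nE nI $$ (k,j))"
    by (rule sum.cong[OF refl]) (simp add: qd)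
  finally show ?thesis .
qed

context fixes nE nI :: nat and a :: "nat \<Rightarrow> real" and A B :: "complex mat"
  assumes a_pos: "\<forall>i < nI. a i > 0"
  and A: "A \<in> carrier_mat (nE + 2*nI) (nE + 2*nI)" and B: "B \<in> carrier_mat (nE + 2*nI) (nE + 2*nI)"
  and sa: "mat_adjoint (A * mat_adjoint B) = A * mat_adjoint B"
begin

abbreviation "N \<equiv> nE + 2*nI"
abbreviation "W \<equiv> Sk N (mat_adjoint B) N"
abbreviation "pp \<equiv> projW N (mat_adjoint B)"

lemmas Bs' = Bs[OF A B sa]

lemma Wc: "x \<in> W \<Longrightarrow> x \<in> carrier_vec N" using Sk_carrier[OF Bs'] by auto

lemma Lk_W: assumes x: "x \<in> W"
  shows "Lkappa nE nI A B a t x = Lop N A B x + pp (Mmat nE nI a t *\<^sub>v x)"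
proof -
  have xc: "x \<in> carrier_vec N" using Wc x .
  have px: "projKerPerp B x = x" using pKP[OF A B sa xc] projW_id[OF Bs' x] by simp
  have Mx: "Mmat nE nI a t *\<^sub>v x \<in> carrier_vec N" using mult_mat_vec_carrier[OF M_carrier xc] .
  show ?thesis unfolding Lkappa_def px pKP[OF A B sa Mx] ..
qed

lemma Lk_in_W: "x \<in> W \<Longrightarrow> Lkappa nE nI A B a t x \<in> W"
proof -
  assume x: "x \<in> W"
  have xc: "x \<in> carrier_vec N" using Wc x .
  have Mx: "Mmat nE nI a t *\<^sub>v x \<in> carrier_vec N" using mult_mat_vec_carrier[OF M_carrier xc] .
  show ?thesis unfolding Lk_W[OF x]
    by (rule Sk_add[OF Bs' Lop_char(1)[OF A B sa xc] projW(1)[OF Bs' Mx]])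
qed

lemma Lk_herm: assumes x: "x \<in> W" and y: "y \<in> W"
  shows "Lkappa nE nI A B a t x \<bullet>c y = x \<bullet>c Lkappa nE nI A B a t y"
proof -
  have xc: "x \<in> carrier_vec N" and yc: "y \<in> carrier_vec N" using Wc x y by auto
  have Mx: "Mmat nE nI a t *\<^sub>v x \<in> carrier_vec N" using mult_mat_vec_carrier[OF M_carrier xc] .
  have My: "Mmat nE nI a t *\<^sub>v y \<in> carrier_vec N" using mult_mat_vec_carrier[OF M_carrier yc] .
  have Lx: "Lop N A B x \<in> carrier_vec N" and Ly: "Lop N A B y \<in> carrier_vec N"
    using Lop_carrier[OF A B sa] xc yc by auto
  have pMx: "pp (Mmat nE nI a t *\<^sub>v x) \<in> carrier_vec N" and pMy: "pp (Mmat nE nI a t *\<^sub>v y) \<in> carrier_vec N"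
    using projW_carrier[OF Bs'] Mx My by auto
  have "Lkappa nE nI A B a t x \<bullet>c y = Lop N A B x \<bullet>c y + pp (Mmat nE nI a t *\<^sub>v x) \<bullet>c y"
    unfolding Lk_W[OF x] by (rule cip_add_l[OF Lx pMx yc])
  also have "Lop N A B x \<bullet>c y = x \<bullet>c Lop N A B y" by (rule Lop_herm[OF A B sa x y])
  also have "pp (Mmat nE nI a t *\<^sub>v x) \<bullet>c y = (Mmat nE nI a t *\<^sub>v x) \<bullet>c y" by (rule projW_ip_l[OF Bs' Mx y])
  also have "\<dots> = x \<bullet>c (Mmat nE nI a t *\<^sub>v y)" by (rule M_herm[OF xc yc])
  also have "\<dots> = x \<bullet>c pp (Mmat nE nI a t *\<^sub>v y)" by (rule projW_ip_r[OF Bs' My x, symmetric])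
  also have "x \<bullet>c Lop N A B y + x \<bullet>c pp (Mmat nE nI a t *\<^sub>v y) = x \<bullet>c Lkappa nE nI A B a t y"
    unfolding Lk_W[OF y] by (rule cip_add_r[OF Ly pMy xc, symmetric])
  finally show ?thesis .
qed

lemma Lk_quad: assumes x: "x \<in> W"
  shows "Re (Lkappa nE nI A B a t x \<bullet>c x) = Re (Lop N A B x \<bullet>c x) +
           (\<Sum>k<N. Dentry nE nI a t k * (cmod ((Qmat nE nI *\<^sub>v x) $ k))\<^sup>2)"
proof -
  have xc: "x \<in> carrier_vec N" using Wc x .
  have Mx: "Mmat nE nI a t *\<^sub>v x \<in> carrier_vec N" using mult_mat_vec_carrier[OF M_carrier xc] .
  have Lx: "Lop N A B x \<in> carrier_vec N" using Lop_carrier[OF A B sa] xc by auto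
  have pMx: "pp (Mmat nE nI a t *\<^sub>v x) \<in> carrier_vec N" using projW_carrier[OF Bs'] Mx by auto
  have "Lkappa nE nI A B a t x \<bullet>c x = Lop N A B x \<bullet>c x + pp (Mmat nE nI a t *\<^sub>v x) \<bullet>c x"
    unfolding Lk_W[OF x] by (rule cip_add_l[OF Lx pMx xc])
  also have "pp (Mmat nE nI a t *\<^sub>v x) \<bullet>c x = (Mmat nE nI a t *\<^sub>v x) \<bullet>c x" by (rule projW_ip_l[OF Bs' Mx x])
  finally show ?thesis using M_quad[OF xc, of a t] by simp
qed

lemma Lk_diff: assumes x: "x \<in> W"
  shows "vnorm (Lkappa nE nI A B a t x - Lkappa nE nI A B a s x)
     \<le> (\<Sum>i<N. \<Sum>j<N. cmod (Mmat nE nI a t $$ (i,j) - Mmat nE nI a s $$ (i,j))) * vnorm x"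
proof -
  have xc: "x \<in> carrier_vec N" using Wc x .
  let ?Mt = "Mmat nE nI a t" and ?Ms = "Mmat nE nI a s"
  have Mt: "?Mt *\<^sub>v x \<in> carrier_vec N" using mult_mat_vec_carrier[OF M_carrier xc] .
  have Ms: "?Ms *\<^sub>v x \<in> carrier_vec N" using mult_mat_vec_carrier[OF M_carrier xc] .
  have Lx: "Lop N A B x \<in> carrier_vec N" using Lop_carrier[OF A B sa] xc by auto
  have pt: "pp (?Mt *\<^sub>v x) \<in> carrier_vec N" and ps: "pp (?Ms *\<^sub>v x) \<in> carrier_vec N"
    using projW_carrier[OF Bs'] Mt Ms by auto
  define d where "d = ?Mt *\<^sub>v x - ?Ms *\<^sub>v x"
  have dc: "d \<in> carrier_vec N" unfolding d_def using Mt Ms by auto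
  have Mtc: "?Mt \<in> carrier_mat N N" and Msc: "?Ms \<in> carrier_mat N N" using M_carrier[of nE nI a t] M_carrier[of nE nI a s] by auto
  have e1: "?Mt *\<^sub>v x = d + ?Ms *\<^sub>v x" unfolding d_def using Mt Ms Mtc Msc by (intro eq_vecI) auto
  have pd: "pp d \<in> carrier_vec N" using projW_carrier[OF Bs' dc] .
  have e2: "pp (?Mt *\<^sub>v x) = pp d + pp (?Ms *\<^sub>v x)" unfolding e1 by (rule projW_add[OF Bs' dc Ms])
  have e3: "Lkappa nE nI A B a t x - Lkappa nE nI A B a s x = pp d"
    unfolding Lk_W[OF x] e2 using Lx pd ps by (intro eq_vecI) auto
  have MD: "?Mt - ?Ms \<in> carrier_mat N N" using Mtc Msc by auto
  have e4: "d = (?Mt - ?Ms) *\<^sub>v x" unfolding d_def by (rule minus_mult_distrib_mat_vec[OF Mtc Msc xc, symmetric])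
  have "vnorm (pp d) \<le> vnorm d" by (rule projW_contr[OF Bs' dc])
  also have "\<dots> \<le> (\<Sum>i<N. \<Sum>j<N. cmod ((?Mt - ?Ms) $$ (i,j))) * vnorm x"
    unfolding e4 by (rule mat_vec_bound[OF MD xc])
  also have "(\<Sum>i<N. \<Sum>j<N. cmod ((?Mt - ?Ms) $$ (i,j))) = (\<Sum>i<N. \<Sum>j<N. cmod (?Mt $$ (i,j) - ?Ms $$ (i,j)))"
    by (intro sum.cong refl) (use Mtc Msc in auto)
  finally show ?thesis unfolding e3 .
qed

lemma g_cont: "isCont (\<lambda>t. \<Sum>i<N. \<Sum>j<N. cmod (Mmat nE nI a t $$ (i,j) - Mmat nE nI a s $$ (i,j))) t0"
proof -
  have eq: "(\<lambda>t. \<Sum>i<N. \<Sum>j<N. cmod (Mmat nE nI a t $$ (i,j) - Mmat nE nI a s $$ (i,j))) =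
     (\<lambda>t. \<Sum>i<N. \<Sum>j<N. cmod ((\<Sum>k<N. Qmat nE nI $$ (i,k) * complex_of_real (Dentry nE nI a t k) * Qmat nE nI $$ (k,j)) - Mmat nE nI a s $$ (i,j)))"
    by (intro ext sum.cong refl) (simp add: M_entry)
  have dc: "isCont (\<lambda>t. Dentry nE nI a t k) t0" if "k < N" for k using D_cont[OF a_pos that] .
  show ?thesis unfolding eq
    by (intro continuous_intros dc) auto
qed

lemma Lk_decr: assumes x: "x \<in> W" and nz: "x \<noteq> 0\<^sub>v N" and s: "0 \<le> s" and st: "s < t"
  shows "Re (Lkappa nE nI A B a t x \<bullet>c x) < Re (Lkappa nE nI A B a s x \<bullet>c x)"
proof -
  have xc: "x \<in> carrier_vec N" using Wc x .
  have qx: "Qmat nE nI *\<^sub>v x \<in> carrier_vec N" using mult_mat_vec_carrier[OF Q_carrier xc] .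
  have "Qmat nE nI *\<^sub>v x \<noteq> 0\<^sub>v N" using Q_inj[OF xc nz] .
  then obtain k where k: "k < N" "(Qmat nE nI *\<^sub>v x) $ k \<noteq> 0"
    using qx by (metis eq_vecI carrier_vecD index_zero_vec(1) index_zero_vec(2))
  have "0 < (\<Sum>k<N. (Dentry nE nI a s k - Dentry nE nI a t k) * (cmod ((Qmat nE nI *\<^sub>v x) $ k))\<^sup>2)"
  proof (rule sum_pos2[of _ k])
    show "finite {..<N}" by simp
    show "k \<in> {..<N}" using k by simp
    show "0 < (Dentry nE nI a s k - Dentry nE nI a t k) * (cmod ((Qmat nE nI *\<^sub>v x) $ k))\<^sup>2"
      using D_decr[OF a_pos k(1) s st] k(2) by simp
    show "\<And>i. i \<in> {..<N} \<Longrightarrow> 0 \<le> (Dentry nE nI a s i - Dentry nE nI a t i) * (cmod ((Qmat nE nI *\<^sub>v x) $ i))\<^sup>2"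
      using D_decr[OF a_pos _ s st] by (auto intro!: mult_nonneg_nonneg simp: less_imp_le)
  qed
  thus ?thesis unfolding Lk_quad[OF x] by (simp add: sum_subtractf left_diff_distrib)
qed

lemma part0: "\<forall>\<kappa> \<ge> 0. \<forall>x \<in> RanPperp N B.
        Lkappa nE nI A B a \<kappa> x \<in> RanPperp N B \<and>
        (\<forall>y \<in> RanPperp N B. Lkappa nE nI A B a \<kappa> x \<bullet>c y = x \<bullet>c Lkappa nE nI A B a \<kappa> y)"
  unfolding RanPperp_eq[OF A B sa] using Lk_in_W Lk_herm by blast

lemma part1: "\<forall>\<kappa>0 \<ge> 0. \<forall>\<epsilon> > 0. \<exists>\<delta> > 0. \<forall>\<kappa> \<ge> 0. \<bar>\<kappa> - \<kappa>0\<bar> < \<delta> \<longrightarrow>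
          op_norm_on (RanPperp N B)
            (\<lambda>x. Lkappa nE nI A B a \<kappa> x - Lkappa nE nI A B a \<kappa>0 x) < \<epsilon>"
proof (intro allI impI)
  fix \<kappa>0 \<epsilon> :: real assume k0: "\<kappa>0 \<ge> 0" and e: "\<epsilon> > 0"
  define g where "g t = (\<Sum>i<N. \<Sum>j<N. cmod (Mmat nE nI a t $$ (i,j) - Mmat nE nI a \<kappa>0 $$ (i,j)))" for t
  have g0: "g \<kappa>0 = 0" unfolding g_def by simp
  have gnn: "g t \<ge> 0" for t unfolding g_def by (intro sum_nonneg) auto
  have "isCont g \<kappa>0" unfolding g_def by (rule g_cont)
  hence "g \<midarrow>\<kappa>0\<rightarrow> g \<kappa>0" unfolding isCont_def .
  then obtain \<delta> where d: "\<delta> > 0" "\<forall>x. x \<noteq> \<kappa>0 \<and> norm (x - \<kappa>0) < \<delta> \<longrightarrow> norm (g x - g \<kappa>0) < \<epsilon>"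
    using e unfolding LIM_eq by blast
  show "\<exists>\<delta> > 0. \<forall>\<kappa> \<ge> 0. \<bar>\<kappa> - \<kappa>0\<bar> < \<delta> \<longrightarrow>
          op_norm_on (RanPperp N B) (\<lambda>x. Lkappa nE nI A B a \<kappa> x - Lkappa nE nI A B a \<kappa>0 x) < \<epsilon>"
  proof (intro exI[of _ \<delta>] conjI allI impI)
    show "\<delta> > 0" by fact
    fix \<kappa> :: real assume "\<kappa> \<ge> 0" and kd: "\<bar>\<kappa> - \<kappa>0\<bar> < \<delta>"
    have gk: "g \<kappa> < \<epsilon>"
    proof (cases "\<kappa> = \<kappa>0")
      case True thus ?thesis using g0 e by simp
    next
      case False thus ?thesis using d(2)[rule_format, of \<kappa>] kd g0 gnn[of \<kappa>] by simp
    qed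
    let ?S = "(\<lambda>x. vnorm (Lkappa nE nI A B a \<kappa> x - Lkappa nE nI A B a \<kappa>0 x)) ` {x \<in> W. vnorm x \<le> 1}"
    have "0\<^sub>v N \<in> W" by (rule Sk_zero[OF Bs'])
    hence "0\<^sub>v N \<in> {x \<in> W. vnorm x \<le> 1}" using vnorm_zero[of N] by simp
    hence ne: "?S \<noteq> {}" by blast
    have ub: "\<forall>v\<in>?S. v \<le> g \<kappa>"
    proof
      fix v assume "v \<in> ?S"
      then obtain x where x: "x \<in> W" "vnorm x \<le> 1" and v: "v = vnorm (Lkappa nE nI A B a \<kappa> x - Lkappa nE nI A B a \<kappa>0 x)"
        by auto
      have "v \<le> g \<kappa> * vnorm x" unfolding v g_def by (rule Lk_diff[OF x(1)])
      also have "\<dots> \<le> g \<kappa> * 1" using x(2) gnn by (intro mult_left_mono) auto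
      finally show "v \<le> g \<kappa>" by simp
    qed
    have "op_norm_on (RanPperp N B) (\<lambda>x. Lkappa nE nI A B a \<kappa> x - Lkappa nE nI A B a \<kappa>0 x) = Sup ?S"
      unfolding op_norm_on_def RanPperp_eq[OF A B sa] ..
    also have "\<dots> \<le> g \<kappa>" using cSup_least[OF ne] ub by blast
    finally show "op_norm_on (RanPperp N B) (\<lambda>x. Lkappa nE nI A B a \<kappa> x - Lkappa nE nI A B a \<kappa>0 x) < \<epsilon>"
      using gk by simp
  qed
qed

lemma part2: "\<forall>x \<in> RanPperp N B. x \<noteq> 0\<^sub>v N \<longrightarrow>
          (\<forall>\<kappa>0 \<ge> 0. Lkappa nE nI A B a \<kappa>0 x \<bullet>c x = 0 \<longrightarrow>
             (\<forall>\<kappa> \<ge> 0. \<kappa> < \<kappa>0 \<longrightarrow> Re (Lkappa nE nI A B a \<kappa> x \<bullet>c x) > 0) \<and>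
             (\<forall>\<kappa>. \<kappa> > \<kappa>0 \<longrightarrow> Re (Lkappa nE nI A B a \<kappa> x \<bullet>c x) < 0))"
  unfolding RanPperp_eq[OF A B sa]
proof (intro ballI impI allI conjI)
  fix x \<kappa>0 :: _ assume x: "x \<in> W" and nz: "x \<noteq> 0\<^sub>v N" and k0: "\<kappa>0 \<ge> 0"
    and z: "Lkappa nE nI A B a \<kappa>0 x \<bullet>c x = 0"
  have z': "Re (Lkappa nE nI A B a \<kappa>0 x \<bullet>c x) = 0" using z by simp
  fix \<kappa> :: real
  { assume "\<kappa> \<ge> 0" "\<kappa> < \<kappa>0"
    thus "Re (Lkappa nE nI A B a \<kappa> x \<bullet>c x) > 0" using Lk_decr[OF x nz, of \<kappa> \<kappa>0] z' by simp }
  { assume "\<kappa> > \<kappa>0"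
    thus "Re (Lkappa nE nI A B a \<kappa> x \<bullet>c x) < 0" using Lk_decr[OF x nz k0, of \<kappa>] z' by simp }
qed

lemma part3: "\<exists>\<gamma> \<ge> 0. \<forall>x \<in> RanPperp N B. x \<noteq> 0\<^sub>v N \<longrightarrow>
          Re (Lkappa nE nI A B a \<gamma> x \<bullet>c x) < 0"
proof -
  define C where "C = (\<Sum>i<N. \<Sum>j<N. cmod (Lmat N A B $$ (i,j)))"
  have C: "C \<ge> 0" unfolding C_def by (intro sum_nonneg) auto
  define \<gamma> where "\<gamma> = 2 * (C + 1) + (\<Sum>i<nI. 2 / a i)"
  have sn: "(\<Sum>i<nI. 2 / a i) \<ge> 0" using a_pos by (intro sum_nonneg) auto
  have g: "\<gamma> \<ge> 0" unfolding \<gamma>_def using C sn by simp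
  have LM: "Lmat N A B \<in> carrier_mat N N" using Lmat[OF A B sa] .
  show ?thesis
  proof (intro exI[of _ \<gamma>] conjI g ballI impI)
    fix x assume xR: "x \<in> RanPperp N B" and nz: "x \<noteq> 0\<^sub>v N"
    have x: "x \<in> W" using xR RanPperp_eq[OF A B sa] by simp
    have xc: "x \<in> carrier_vec N" using Wc x .
    have vp: "(vnorm x)\<^sup>2 > 0" unfolding vnorm_sq[OF xc] using cip_self_pos[OF xc nz] .
    have "Re (Lop N A B x \<bullet>c x) \<le> cmod (Lop N A B x \<bullet>c x)" by (rule complex_Re_le_cmod)
    also have "\<dots> \<le> C * (vnorm x)\<^sup>2" unfolding Lop_Lmat[OF A B sa xc] C_def by (rule quad_bound[OF LM xc])
    finally have L1: "Re (Lop N A B x \<bullet>c x) \<le> C * (vnorm x)\<^sup>2" .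
    have "(\<Sum>k<N. Dentry nE nI a \<gamma> k * (cmod ((Qmat nE nI *\<^sub>v x) $ k))\<^sup>2)
          \<le> (\<Sum>k<N. - (C + 1) * (cmod ((Qmat nE nI *\<^sub>v x) $ k))\<^sup>2)"
      by (intro sum_mono mult_right_mono D_bound[OF a_pos _ C \<gamma>_def]) auto
    also have "\<dots> = - (C + 1) * (vnorm x)\<^sup>2" by (simp add: sum_distrib_left[symmetric] Q_sumsq[OF xc])
    finally have L2: "(\<Sum>k<N. Dentry nE nI a \<gamma> k * (cmod ((Qmat nE nI *\<^sub>v x) $ k))\<^sup>2) \<le> - (C + 1) * (vnorm x)\<^sup>2" .
    have H: "Re (Lop N A B x \<bullet>c x) + (\<Sum>k<N. Dentry nE nI a \<gamma> k * (cmod ((Qmat nE nI *\<^sub>v x) $ k))\<^sup>2)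
             \<le> C * (vnorm x)\<^sup>2 + (- (C + 1) * (vnorm x)\<^sup>2)" using L1 L2 by (rule add_mono)
    have H2: "C * (vnorm x)\<^sup>2 + (- (C + 1) * (vnorm x)\<^sup>2) = - (vnorm x)\<^sup>2" by (simp add: algebra_simps)
    show "Re (Lkappa nE nI A B a \<gamma> x \<bullet>c x) < 0"
      unfolding Lk_quad[OF x] using H H2 vp by linarith
  qed
qed

end

theorem lemma5p3:
  fixes nE nI :: nat and a :: "nat \<Rightarrow> real" and A B :: "complex mat"
  defines "n \<equiv> nE + 2 * nI"
  assumes a_pos: "\<forall>i < nI. a i > 0"
    and A_dim: "A \<in> carrier_mat n n" and B_dim: "B \<in> carrier_mat n n"
    and surj: "\<forall>y \<in> carrier_vec n. \<exists>u \<in> carrier_vec n. \<exists>v \<in> carrier_vec n.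
                 A *\<^sub>v u + B *\<^sub>v v = y"
    and selfadj: "mat_adjoint (A * mat_adjoint B) = A * mat_adjoint B"
  shows
    \<comment> \<open>L(kappa,a) is a Hermitian operator in Ran P^perp for every kappa \<ge> 0\<close>
    "(\<forall>\<kappa> \<ge> 0. \<forall>x \<in> RanPperp n B.
        Lkappa nE nI A B a \<kappa> x \<in> RanPperp n B \<and>
        (\<forall>y \<in> RanPperp n B. Lkappa nE nI A B a \<kappa> x \<bullet>c y = x \<bullet>c Lkappa nE nI A B a \<kappa> y))
     \<comment> \<open>(1) norm continuity on [0,\<infinity>)\<close>
     \<and> (\<forall>\<kappa>0 \<ge> 0. \<forall>\<epsilon> > 0. \<exists>\<delta> > 0. \<forall>\<kappa> \<ge> 0. \<bar>\<kappa> - \<kappa>0\<bar> < \<delta> \<longrightarrow>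
          op_norm_on (RanPperp n B)
            (\<lambda>x. Lkappa nE nI A B a \<kappa> x - Lkappa nE nI A B a \<kappa>0 x) < \<epsilon>)
     \<comment> \<open>(2) the quadratic forms are decreasing at value zero\<close>
     \<and> (\<forall>x \<in> RanPperp n B. x \<noteq> 0\<^sub>v n \<longrightarrow>
          (\<forall>\<kappa>0 \<ge> 0. Lkappa nE nI A B a \<kappa>0 x \<bullet>c x = 0 \<longrightarrow>
             (\<forall>\<kappa> \<ge> 0. \<kappa> < \<kappa>0 \<longrightarrow> Re (Lkappa nE nI A B a \<kappa> x \<bullet>c x) > 0) \<and>
             (\<forall>\<kappa>. \<kappa> > \<kappa>0 \<longrightarrow> Re (Lkappa nE nI A B a \<kappa> x \<bullet>c x) < 0)))
     \<comment> \<open>(3) strict negativity for some gamma\<close>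
     \<and> (\<exists>\<gamma> \<ge> 0. \<forall>x \<in> RanPperp n B. x \<noteq> 0\<^sub>v n \<longrightarrow>
          Re (Lkappa nE nI A B a \<gamma> x \<bullet>c x) < 0)"
proof -
  have A': "A \<in> carrier_mat (nE + 2 * nI) (nE + 2 * nI)" using A_dim unfolding n_def .
  have B': "B \<in> carrier_mat (nE + 2 * nI) (nE + 2 * nI)" using B_dim unfolding n_def .
  show ?thesis unfolding n_def
    using part0[OF a_pos A' B' selfadj] part1[OF a_pos A' B' selfadj]
      part2[OF a_pos A' B' selfadj] part3[OF a_pos A' B' selfadj] by blast
qed

end
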